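(* Let $m\ge d\ge1$, $\lambda=d/m$, and let $A,B$ be real $m\times d$ matrices with $p(x,y)=y^{m-d}\det(xyI_d-A^TA)$ and $q(x,y)=y^{m-d}\det(xyI_d-B^TB)$. Then there exists a real $m\times d$ matrix $C$ such that $[p\boxplus_{d,\lambda}q](x,y)=y^{m-d}\det(xyI_d-C^TC)$.
   Context: For univariate $p(x)=\sum_{i=0}^d(-1)^ia_ix^{d-i}$, $q(x)=\sum(-1)^ib_ix^{d-i}$: $(p\boxplus_{d,\lambda}q)(x)=\sum_{k=0}^dx^{d-k}(-1)^k\sum_{i+j=k}\frac{(d-i)!(d-j)!}{d!(d-k)!}\frac{(m-i)!(m-j)!}{m!(m-k)!}a_ib_j$, which equals the average over Haar $Q\in\mathcal O_m$, $R\in\mathcal O_d$ of $\det(xI_d-(A+QBR)^T(A+QBR))$ when $p=\det(xI_d-A^TA)$, $q=\det(xI_d-B^TB)$. Bivariate version: for $p(x,y)=y^{m-d}p(xy)$, $q(x,y)=y^{m-d}q(xy)$, $[p\boxplus_{d,\lambda}q](x,y):=y^{m-d}(p\boxplus_{d,\lambda}q)(xy)$ (equivalently the Haar average of $y^{m-d}\det(xyI_d-(A+QBR)^T(A+QBR))$). *)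

theory Defs
  imports "HOL-Analysis.Analysis" "HOL-Computational_Algebra.Polynomial"
begin

text \<open>Signed coefficient a_i of a degree-d polynomial written as
  p(x) = sum_{i=0}^d (-1)^i a_i x^(d-i).\<close>
definition sgn_coeff :: "nat \<Rightarrow> real poly \<Rightarrow> nat \<Rightarrow> real" where
  "sgn_coeff d p i = (-1) ^ i * coeff p (d - i)"

text \<open>Rectangular additive convolution  p boxplus_{d,lambda} q  with lambda = d/m.\<close>
definition rect_conv :: "nat \<Rightarrow> nat \<Rightarrow> real poly \<Rightarrow> real poly \<Rightarrow> real poly" where
  "rect_conv d m p q =
     (\<Sum>k\<in>{0..d}. monom ((-1) ^ k *
        (\<Sum>i\<in>{0..k}. let j = k - i in
           (fact (d - i) * fact (d - j)) / (fact d * fact (d - k)) *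
           ((fact (m - i) * fact (m - j)) / (fact m * fact (m - k))) *
           sgn_coeff d p i * sgn_coeff d q j)) (d - k))"

end

theory Submission
  imports Defs "HOL-Computational_Algebra.Fundamental_Theorem_Algebra"
begin


lemma sq_aux: "(sg::complex) = (\<i> * ep + R)/2 \<or> sg = (\<i> * ep - R)/2 \<Longrightarrow> sg^2 - \<i> * ep * sg = (R^2 + ep^2)/4"
proof (elim disjE)
  assume "sg = (\<i> * ep + R)/2"
  hence R: "R = 2 * sg - \<i> * ep" by (simp add: field_simps)
  show ?thesis unfolding R by (simp add: power2_eq_square algebra_simps)
next
  assume "sg = (\<i> * ep - R)/2"
  hence R: "R = \<i> * ep - 2 * sg" by (simp add: field_simps)
  show ?thesis unfolding R by (simp add: power2_eq_square algebra_simps)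
qed

lemma im_aux: "Im (sg::complex) > 0 \<Longrightarrow> Im (- 1 / sg) > 0"
proof -
  assume h: "Im sg > 0"
  have "Re sg * Re sg + Im sg * Im sg > 0" using h by (simp add: add_nonneg_pos)
  thus ?thesis using h by (simp add: Im_divide power2_eq_square)
qed

lemma two_by_two:
  fixes a b c e s0 :: complex
  assumes H: "\<And>s t. Im s > 0 \<Longrightarrow> Im t > 0 \<or> t = 0 \<Longrightarrow> a + b * s + c * t + e * s * t \<noteq> 0"
    and s0: "Im s0 > 0"
  shows "a - e + b * s0 \<noteq> 0"
proof
  assume Z: "a - e + b * s0 = 0"
  show False
  proof (cases "b = 0")
    case True
    with Z have ae: "a = e" by simp
    have a0: "a \<noteq> 0" using H[of \<i> 0] True by simp
    define lam where "lam = cmod (c/a) + 1"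
    have lpos: "lam > 0" unfolding lam_def by (simp add: add_nonneg_pos)
    define s where "s = complex_of_real lam * \<i> - c/a"
    define t where "t = \<i> / complex_of_real lam"
    have "Im (c/a) \<le> cmod (c/a)" using abs_Im_le_cmod[of "c/a"] by linarith
    hence ims: "Im s > 0" unfolding s_def lam_def by simp
    have imt: "Im t > 0" unfolding t_def using lpos by (simp add: Im_divide)
    have "a + b * s + c * t + e * s * t = 0"
      unfolding s_def t_def using True ae a0 lpos
      by (simp add: field_simps)
    with H[OF ims] imt show False by blast
  next
    case False
    define eps where "eps = Im s0 / 2"
    have epos: "eps > 0" using s0 unfolding eps_def by simp
    define s where "s = s0 - \<i> * complex_of_real eps"
    have ims: "Im s > 0" unfolding s_def eps_def using s0 by simp
    define K where "K = c + e * s"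
    define R where "R = csqrt (- ((complex_of_real eps) ^ 2) + 4 * K/b)"
    have R2: "R^2 = - ((complex_of_real eps) ^ 2) + 4 * K/b" unfolding R_def by simp
    define sg where "sg = (if Im R \<ge> 0 then (\<i> * complex_of_real eps + R)/2 else (\<i> * complex_of_real eps - R)/2)"
    have imsig: "Im sg > 0" unfolding sg_def using epos by auto
    hence sig0: "sg \<noteq> 0" by auto
    have sgc: "sg = (\<i> * complex_of_real eps + R)/2 \<or> sg = (\<i> * complex_of_real eps - R)/2"
      unfolding sg_def by auto
    have quad: "b * sg^2 - \<i> * b * complex_of_real eps * sg - K = 0"
    proof -
      have "sg^2 - \<i> * complex_of_real eps * sg = (R^2 + (complex_of_real eps) ^ 2)/4"
        using sgc by (rule sq_aux)
      also have "\<dots> = K / b" using R2 by simp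
      finally have "sg^2 - \<i> * complex_of_real eps * sg = K / b" .
      hence "b * (sg^2 - \<i> * complex_of_real eps * sg) = K" using False by (simp add: field_simps)
      thus ?thesis by (simp add: algebra_simps)
    qed
    have lin: "a - e + b * s = - \<i> * b * complex_of_real eps"
      using Z unfolding s_def by (simp add: algebra_simps)
    have ims2: "Im (s + sg) > 0" using ims imsig by simp
    have imt2: "Im (- 1/sg) > 0" using imsig by (rule im_aux)
    have "a + b * (s+sg) + c * (-1/sg) + e * (s+sg) * (-1/sg)
        = ((a - e + b * s) * sg + b * sg^2 - (c + e * s))/sg"
      using sig0 by (simp add: field_simps power2_eq_square)
    also have "(a - e + b * s) * sg + b * sg^2 - (c + e * s) = b * sg^2 - \<i> * b * complex_of_real eps * sg - K"
      unfolding lin K_def by (simp add: algebra_simps)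
    also have "\<dots> = 0" by (rule quad)
    also have "0 / sg = 0" by simp
    finally show False using H[OF ims2] imt2 by blast
  qed
qed

lemma prod_H_not_nonneg:
  fixes w w' :: complex
  assumes "Im w > 0" "Im w' > 0"
  shows "w * w' \<noteq> complex_of_real r \<or> r < 0"
proof (rule ccontr)
  assume "\<not> ?thesis"
  hence e: "w * w' = complex_of_real r" and r: "r \<ge> 0" by auto
  have w0: "w \<noteq> 0" using assms by auto
  have "w' = complex_of_real r / w" using e w0 by (simp add: field_simps)
  hence "Im w' = - r * Im w / (cmod w)^2"
    by (simp add: Im_divide cmod_power2)
  also have "\<dots> \<le> 0" using r assms by (simp add: divide_nonpos_nonneg mult_nonneg_nonneg)
  finally show False using assms by simp
qed

lemma one_minus_ne:
  fixes w w' \<beta> :: complex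
  assumes "Im \<beta> = 0" "Re \<beta> \<ge> 0" "Im w > 0 \<or> w = 0" "Im w' > 0 \<or> w' = 0"
  shows "1 - \<beta> * w * w' \<noteq> 0"
proof
  assume E: "1 - \<beta> * w * w' = 0"
  hence nz: "\<beta> \<noteq> 0" "w \<noteq> 0" "w' \<noteq> 0" by auto
  hence hw: "Im w > 0" "Im w' > 0" using assms by auto
  have b: "\<beta> = complex_of_real (Re \<beta>)" using assms(1) by (simp add: complex_eq_iff)
  have "Re \<beta> > 0" using nz assms b by (cases "Re \<beta> = 0") auto
  have "\<beta> * (w * w') = 1" using E by (simp add: algebra_simps)
  hence "w * w' = 1 / \<beta>" using nz by (simp add: field_simps)
  hence "w * w' = complex_of_real (1 / Re \<beta>)" using b by (metis of_real_1 of_real_divide)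
  with prod_H_not_nonneg[OF hw, of "1/Re \<beta>"] \<open>Re \<beta> > 0\<close> show False by simp
qed

lemma pair_lemma:
  fixes a b c e \<beta> :: complex
  assumes H: "\<And>s t. Im s > 0 \<Longrightarrow> Im t > 0 \<Longrightarrow> a + b * s + c * t + e * s * t \<noteq> 0"
    and \<beta>: "Im \<beta> = 0" "Re \<beta> \<ge> 0"
    and st: "Im s > 0" "Im t > 0"
  shows "a + b * s + c * t + e * s * t - \<beta> * e \<noteq> 0"
proof -
  have step1: "(a + c * t) + \<beta> * w'* (b + e * t) + (b + e * t) * s \<noteq> 0"
    if t: "Im t > 0" and w': "Im w' > 0 \<or> w' = 0" and s: "Im s > 0" for s t w'
  proof -
    have "(a + c * t) - (-\<beta> * w'* (b+e * t)) + (b + e * t) * s \<noteq> 0"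
    proof (rule two_by_two[OF _ s])
      fix s w :: complex assume s: "Im s > 0" and w: "Im w > 0 \<or> w = 0"
      have "a + b * s + c * t + e * s * t \<noteq> 0" using H[OF s t] .
      moreover have "1 - \<beta> * w * w' \<noteq> 0" using one_minus_ne[OF \<beta> w w'] .
      ultimately have "(a + b * s + c * t + e * s * t) * (1 - \<beta> * w * w') \<noteq> 0" by simp
      thus "a + c * t + (b + e * t) * s + - \<beta> * w' * (a + c * t) * w + - \<beta> * w' * (b + e * t) * s * w \<noteq> 0"
        by (simp add: algebra_simps)
    qed
    thus ?thesis by simp
  qed
  have "(a + b * s) - \<beta> * e + (c + e * s) * t \<noteq> 0"
  proof (rule two_by_two[OF _ st(2)])
    fix t w' :: complex assume t: "Im t > 0" and w': "Im w' > 0 \<or> w' = 0"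
    have "(a + c * t) + \<beta> * w'* (b + e * t) + (b + e * t) * s \<noteq> 0" using step1[OF t w' st(1)] .
    thus "a + b * s + (c + e * s) * t + \<beta> * b * w' + \<beta> * e * t * w' \<noteq> 0"
      by (simp add: algebra_simps)
  qed
  thus ?thesis by (simp add: algebra_simps)
qed



definition mprod :: "nat set \<Rightarrow> (nat \<Rightarrow> complex) \<Rightarrow> complex" where
  "mprod S z = (\<Prod>i\<in>S. z i)"

lemma sum_Pow_insert:
  assumes "finite A" "l \<notin> A"
  shows "(\<Sum>S\<in>Pow (insert l A). g S) = (\<Sum>S\<in>Pow A. g S + g (insert l S))"
proof -
  have inj: "inj_on (insert l) (Pow A)"
    using assms(2) by (auto simp: inj_on_def)
  have disj: "Pow A \<inter> insert l ` Pow A = {}" using assms(2) by auto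
  have "(\<Sum>S\<in>Pow (insert l A). g S) = (\<Sum>S\<in>Pow A. g S) + (\<Sum>S\<in>insert l ` Pow A. g S)"
    unfolding Pow_insert using assms(1) disj by (simp add: sum.union_disjoint)
  also have "(\<Sum>S\<in>insert l ` Pow A. g S) = (\<Sum>S\<in>Pow A. g (insert l S))"
    using inj by (simp add: sum.reindex)
  finally show ?thesis by (simp add: sum.distrib)
qed

lemma mono_insert: "finite S \<Longrightarrow> l \<notin> S \<Longrightarrow> mprod (insert l S) z = z l * mprod S z"
  unfolding mprod_def by simp

lemma log_deriv_prod:
  fixes \<rho> :: "nat \<Rightarrow> complex"
  assumes "\<forall>i<D. t \<noteq> \<rho> i"
  shows "poly (pderiv (\<Prod>i<D. [:-\<rho> i, 1:])) t = poly (\<Prod>i<D. [:-\<rho> i, 1:]) t * (\<Sum>i<D. 1/(t - \<rho> i))"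
  using assms
proof (induction D)
  case 0
  then show ?case by simp
next
  case (Suc D)
  have IH: "poly (pderiv (\<Prod>i<D. [:-\<rho> i, 1:])) t = poly (\<Prod>i<D. [:-\<rho> i, 1:]) t * (\<Sum>i<D. 1/(t - \<rho> i))"
    using Suc by simp
  have ne: "t - \<rho> D \<noteq> 0" using Suc.prems by simp
  have d1: "pderiv [:-\<rho> D, 1:] = 1" by (simp add: pderiv_pCons)
  have "pderiv (\<Prod>i<Suc D. [:-\<rho> i, 1:]) = (\<Prod>i<D. [:-\<rho> i, 1:]) * pderiv [:-\<rho> D, 1:] + pderiv (\<Prod>i<D. [:-\<rho> i, 1:]) * [:-\<rho> D, 1:]"
    by (simp only: prod.lessThan_Suc pderiv_mult mult.commute[of "[:-\<rho> D, 1:]"])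
  also have "\<dots> = pderiv (\<Prod>i<D. [:-\<rho> i, 1:]) * [:-\<rho> D, 1:] + (\<Prod>i<D. [:-\<rho> i, 1:])"
    by (simp only: d1 mult_1_right add.commute)
  finally have "pderiv (\<Prod>i<Suc D. [:-\<rho> i, 1:]) = pderiv (\<Prod>i<D. [:-\<rho> i, 1:]) * [:-\<rho> D, 1:] + (\<Prod>i<D. [:-\<rho> i, 1:])" .
  hence "poly (pderiv (\<Prod>i<Suc D. [:-\<rho> i, 1:])) t
       = poly (pderiv (\<Prod>i<D. [:-\<rho> i, 1:])) t * (t - \<rho> D) + poly (\<Prod>i<D. [:-\<rho> i, 1:]) t"
    by (simp only: poly_add poly_mult) (simp add: algebra_simps)
  also have "\<dots> = poly (\<Prod>i<D. [:-\<rho> i, 1:]) t * (t - \<rho> D) * ((\<Sum>i<D. 1/(t - \<rho> i)) + 1/(t - \<rho> D))"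
    unfolding IH using ne by (simp add: field_simps)
  also have "\<dots> = poly (\<Prod>i<Suc D. [:-\<rho> i, 1:]) t * (\<Sum>i<Suc D. 1/(t - \<rho> i))"
    by (simp add: algebra_simps)
  finally show ?case .
qed

lemma disk_ident:
  fixes t \<zeta> :: complex
  assumes "t \<noteq> \<zeta>"
  shows "Im t * (cmod (1/(t - \<zeta>)))^2 + Im (1/(t - \<zeta>)) = Im \<zeta> / (cmod (t - \<zeta>))^2"
proof -
  define v where "v = t - \<zeta>"
  have v0: "v \<noteq> 0" using assms unfolding v_def by simp
  have c: "(cmod v)^2 > 0" using v0 by simp
  have "(cmod (1/v))^2 = 1 / (cmod v)^2" by (simp add: norm_divide power_divide)
  moreover have "Im (1/v) = - Im v / (cmod v)^2" by (simp add: Im_divide cmod_power2)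
  moreover have "Im v = Im t - Im \<zeta>" unfolding v_def by simp
  ultimately have "Im t * (cmod (1/v))^2 + Im (1/v) = (Im t - (Im t - Im \<zeta>)) / (cmod v)^2"
    using c by (simp add: field_simps)
  thus ?thesis unfolding v_def by simp
qed

lemma Im_of_nat_mult: "Im (of_nat N * x) = of_nat N * Im x"
  by (induction N) (simp_all add: distrib_right)

lemma laguerre:
  fixes p :: "complex poly" and N :: nat and w t :: complex
  assumes deg: "degree p \<le> N" and N: "N \<ge> 1"
    and stab: "\<And>z. Im z > 0 \<Longrightarrow> poly p z \<noteq> 0"
    and w: "Im w > 0" and t: "Im t > 0"
  shows "of_nat N * poly p t + (w - t) * poly (pderiv p) t \<noteq> 0"
proof
  assume E: "of_nat N * poly p t + (w - t) * poly (pderiv p) t = 0"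
  have p0: "p \<noteq> 0" using stab[of \<i>] by auto
  obtain \<rho> where dec: "smult (lead_coeff p) (\<Prod>i<degree p. [:-\<rho> i, 1:]) = p"
    using complex_poly_decompose' by blast
  define D where "D = degree p"
  define Q where "Q = (\<Prod>i<D. [:-\<rho> i, 1:])"
  define lc where "lc = lead_coeff p"
  have lc0: "lc \<noteq> 0" using p0 unfolding lc_def by simp
  have pQ: "p = smult lc Q" using dec unfolding Q_def lc_def D_def by simp
  have roots: "Im (\<rho> i) \<le> 0" if "i < D" for i
  proof (rule ccontr)
    assume "\<not> Im (\<rho> i) \<le> 0"
    hence "poly p (\<rho> i) \<noteq> 0" using stab by simp
    moreover have "poly Q (\<rho> i) = 0" unfolding Q_def using that
      by (simp add: poly_prod) (metis lessThan_iff)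
    ultimately show False unfolding pQ by simp
  qed
  have tne: "\<forall>i<D. t \<noteq> \<rho> i" using roots t by force
  have Qt: "poly Q t \<noteq> 0" using stab[OF t] unfolding pQ by simp
  define u where "u i = 1 / (t - \<rho> i)" for i
  define U where "U = (\<Sum>i<D. u i)"
  have dQ: "poly (pderiv Q) t = poly Q t * U"
    unfolding Q_def U_def u_def by (rule log_deriv_prod[OF tne])
  have "lc * poly Q t * (of_nat N + (w - t) * U) = 0"
    using E unfolding pQ by (simp add: pderiv_smult dQ algebra_simps)
  hence E2: "of_nat N + (w - t) * U = 0" using lc0 Qt by simp
  have wt: "w \<noteq> t"
  proof
    assume "w = t" with E2 N show False by simp
  qed
  have UN: "U = of_nat N * (1 / (t - w))"
  proof -
    have "(t - w) * U = of_nat N" using E2 by (simp add: algebra_simps)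
    thus ?thesis using wt by (simp add: field_simps)
  qed
  have ui: "Im t * (cmod (u i))^2 \<le> - Im (u i)" if "i < D" for i
  proof -
    have "Im t * (cmod (u i))^2 + Im (u i) = Im (\<rho> i) / (cmod (t - \<rho> i))^2"
      unfolding u_def using tne that by (intro disk_ident) auto
    also have "\<dots> \<le> 0" using roots[OF that] by (simp add: divide_nonpos_nonneg)
    finally show ?thesis by simp
  qed
  have imU: "Im U \<le> 0"
  proof -
    have "Im U = (\<Sum>i<D. Im (u i))" unfolding U_def by (simp add: Im_sum)
    also have "\<dots> \<le> 0"
    proof (rule sum_nonpos)
      fix i assume "i \<in> {..<D}"
      hence "Im t * (cmod (u i))^2 \<le> - Im (u i)" using ui by simp
      moreover have "Im t * (cmod (u i))^2 \<ge> 0" using t by simp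
      ultimately show "Im (u i) \<le> 0" by simp
    qed
    finally show ?thesis .
  qed
  have CS: "(cmod U)^2 \<le> of_nat D * (\<Sum>i<D. (cmod (u i))^2)"
  proof -
    have "cmod U \<le> (\<Sum>i<D. cmod (u i))" unfolding U_def by (rule norm_sum)
    hence "(cmod U)^2 \<le> (\<Sum>i<D. cmod (u i))^2" by (simp add: power_mono)
    also have "\<dots> \<le> (\<Sum>i<D. (cmod (u i))^2) * real (card {..<D})"
      by (rule sum_squared_le_sum_of_squares)
    finally show ?thesis by (simp add: mult.commute)
  qed
  have "Im t * (cmod U)^2 \<le> of_nat D * (\<Sum>i<D. Im t * (cmod (u i))^2)"
    using mult_left_mono[OF CS, of "Im t"] t by (simp add: sum_distrib_left algebra_simps)
  also have "\<dots> \<le> of_nat D * (\<Sum>i<D. - Im (u i))"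
    by (intro mult_left_mono sum_mono ui) auto
  also have "\<dots> = - of_nat D * Im U" unfolding U_def by (simp add: Im_sum sum_negf)
  also have "\<dots> \<le> - of_nat N * Im U"
    using imU deg unfolding D_def by (simp add: mult_right_mono_neg)
  finally have I: "Im t * (cmod U)^2 + of_nat N * Im U \<le> 0" by simp
  define v where "v = 1 / (t - w)"
  have "(cmod U)^2 = (of_nat N)^2 * (cmod v)^2" unfolding UN v_def
    by (simp only: norm_mult power_mult_distrib norm_of_nat)
  moreover have "Im U = of_nat N * Im v" unfolding UN v_def by (rule Im_of_nat_mult)
  ultimately have "(of_nat N)^2 * (Im t * (cmod v)^2 + Im v) \<le> 0"
    using I by (simp add: algebra_simps power2_eq_square)
  hence "Im t * (cmod v)^2 + Im v \<le> 0"
    using N by (simp add: mult_le_0_iff)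
  hence "Im w / (cmod (t - w))^2 \<le> 0" unfolding v_def using disk_ident[of t w] wt by simp
  moreover have "(cmod (t - w))^2 > 0" using wt by simp
  ultimately have "Im w \<le> 0" by (simp add: divide_le_0_iff)
  with w show False by simp
qed



lemma pderiv_sum: "pderiv (sum f A) = (\<Sum>a\<in>A. pderiv (f a))"
  by (induction A rule: infinite_finite_induct) (simp_all add: pderiv_add)

lemma binom_comp_aux: "of_nat (Suc n - k) * of_nat (Suc n choose k) = (of_nat (Suc n) * of_nat (n choose k) :: complex)"
proof -
  have "(Suc n - k) * (Suc n choose k) = Suc n * (n choose k)"
    using binomial_absorb_comp[of "Suc n" k] by simp
  hence "of_nat ((Suc n - k) * (Suc n choose k)) = (of_nat (Suc n * (n choose k)) :: complex)" by simp
  thus ?thesis by (simp only: of_nat_mult)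
qed

lemma binom_suc_aux: "of_nat (Suc k) * of_nat (Suc n choose Suc k) = (of_nat (Suc n) * of_nat (n choose k) :: complex)"
proof -
  have "of_nat (Suc k * (Suc n choose Suc k)) = (of_nat (Suc n * (n choose k)) :: complex)"
    by (simp only: Suc_times_binomial)
  thus ?thesis by (simp only: of_nat_mult)
qed

lemma laguerre_identity:
  fixes c :: "nat \<Rightarrow> complex" and w t :: complex and n :: nat
  defines "Fp \<equiv> (\<Sum>k\<le>Suc n. monom (of_nat (Suc n choose k) * c k) k)"
  shows "of_nat (Suc n) * poly Fp t + (w - t) * poly (pderiv Fp) t
       = of_nat (Suc n) * (\<Sum>k\<le>n. of_nat (n choose k) * (c k + w * c (Suc k)) * t^k)"
proof -
  define B where "B k = of_nat (Suc n choose k) * c k" for k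
  have pF: "poly Fp t = (\<Sum>k\<le>Suc n. B k * t^k)"
    unfolding Fp_def B_def by (simp add: poly_sum poly_monom)
  have pdF: "poly (pderiv Fp) t = (\<Sum>k\<le>Suc n. of_nat k * B k * t^(k-1))"
    unfolding Fp_def B_def by (simp only: pderiv_sum pderiv_monom poly_sum poly_monom)
  have A: "of_nat (Suc n) * (\<Sum>k\<le>Suc n. B k * t^k) - t * (\<Sum>k\<le>Suc n. of_nat k * B k * t^(k-1))
        = of_nat (Suc n) * (\<Sum>k\<le>n. of_nat (n choose k) * c k * t^k)"
  proof -
    have "of_nat (Suc n) * (\<Sum>k\<le>Suc n. B k * t^k) - t * (\<Sum>k\<le>Suc n. of_nat k * B k * t^(k-1))
        = (\<Sum>k\<le>Suc n. (of_nat (Suc n) - of_nat k) * B k * t^k)"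
    proof -
      have eqk: "t * (of_nat k * B k * t^(k-1)) = of_nat k * B k * t^k" for k
        by (cases k) (simp_all add: algebra_simps)
      have "of_nat (Suc n) * (\<Sum>k\<le>Suc n. B k * t^k) - t * (\<Sum>k\<le>Suc n. of_nat k * B k * t^(k-1))
          = (\<Sum>k\<le>Suc n. of_nat (Suc n) * (B k * t^k)) - (\<Sum>k\<le>Suc n. t * (of_nat k * B k * t^(k-1)))"
        by (simp only: sum_distrib_left)
      also have "\<dots> = (\<Sum>k\<le>Suc n. of_nat (Suc n) * (B k * t^k)) - (\<Sum>k\<le>Suc n. of_nat k * B k * t^k)"
        by (simp only: eqk)
      also have "\<dots> = (\<Sum>k\<le>Suc n. (of_nat (Suc n) - of_nat k) * B k * t^k)"
        by (simp only: sum_subtractf[symmetric]) (rule sum.cong[OF refl], simp add: algebra_simps)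
      finally show ?thesis .
    qed
    also have "\<dots> = (\<Sum>k\<le>Suc n. of_nat (Suc n) * of_nat (n choose k) * c k * t^k)"
    proof (rule sum.cong[OF refl])
      fix k assume "k \<in> {..Suc n}"
      hence "k \<le> Suc n" by simp
      hence "(of_nat (Suc n) - of_nat k :: complex) = of_nat (Suc n - k)" by (simp add: of_nat_diff)
      thus "(of_nat (Suc n) - of_nat k) * B k * t^k = of_nat (Suc n) * of_nat (n choose k) * c k * t^k"
        unfolding B_def using binom_comp_aux[of n k] by (simp add: algebra_simps)
    qed
    also have "\<dots> = of_nat (Suc n) * (\<Sum>k\<le>n. of_nat (n choose k) * c k * t^k)"
      by (simp add: sum_distrib_left algebra_simps binomial_eq_0)
    finally show ?thesis .
  qed
  have Bp: "(\<Sum>k\<le>Suc n. of_nat k * B k * t^(k-1)) = of_nat (Suc n) * (\<Sum>k\<le>n. of_nat (n choose k) * c (Suc k) * t^k)"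
  proof -
    have "(\<Sum>k\<le>Suc n. of_nat k * B k * t^(k-1)) = (\<Sum>k\<le>n. of_nat (Suc k) * B (Suc k) * t^k)"
      by (subst sum.atMost_Suc_shift) simp
    also have "\<dots> = (\<Sum>k\<le>n. of_nat (Suc n) * of_nat (n choose k) * c (Suc k) * t^k)"
    proof (rule sum.cong[OF refl])
      fix k
      show "of_nat (Suc k) * B (Suc k) * t^k = of_nat (Suc n) * of_nat (n choose k) * c (Suc k) * t^k"
        unfolding B_def using binom_suc_aux[of k n]
        by (metis (no_types, lifting) mult.assoc)
    qed
    also have "\<dots> = of_nat (Suc n) * (\<Sum>k\<le>n. of_nat (n choose k) * c (Suc k) * t^k)"
      by (simp add: sum_distrib_left algebra_simps)
    finally show ?thesis .
  qed
  have "of_nat (Suc n) * poly Fp t + (w - t) * poly (pderiv Fp) t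
      = (of_nat (Suc n) * (\<Sum>k\<le>Suc n. B k * t^k) - t * (\<Sum>k\<le>Suc n. of_nat k * B k * t^(k-1)))
        + w * (\<Sum>k\<le>Suc n. of_nat k * B k * t^(k-1))"
    unfolding pF pdF by (simp add: algebra_simps)
  also have "\<dots> = of_nat (Suc n) * (\<Sum>k\<le>n. of_nat (n choose k) * c k * t^k)
      + w * (of_nat (Suc n) * (\<Sum>k\<le>n. of_nat (n choose k) * c (Suc k) * t^k))"
    by (simp only: A[unfolded Bp] Bp)
  also have "\<dots> = of_nat (Suc n) * (\<Sum>k\<le>n. of_nat (n choose k) * (c k + w * c (Suc k)) * t^k)"
    by (simp add: sum_distrib_left sum.distrib[symmetric] algebra_simps)
  finally show ?thesis .
qed

lemma gws:
  "\<forall>c z. (\<forall>t. Im t > 0 \<longrightarrow> (\<Sum>k\<le>n. of_nat (n choose k) * c k * t^k) \<noteq> 0) \<longrightarrow>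
     (\<forall>i<n. Im (z i) > 0) \<longrightarrow> (\<Sum>S\<in>Pow {..<n}. c (card S) * mprod S z) \<noteq> 0"
proof (induction n)
  case 0
  show ?case
  proof (intro allI impI)
    fix c :: "nat \<Rightarrow> complex" and z :: "nat \<Rightarrow> complex"
    assume h: "\<forall>t. Im t > 0 \<longrightarrow> (\<Sum>k\<le>0. of_nat (0 choose k) * c k * t^k) \<noteq> 0"
    have "c 0 \<noteq> 0" using h[rule_format, of \<i>] by simp
    thus "(\<Sum>S\<in>Pow {..<0}. c (card S) * mprod S z) \<noteq> 0" by (simp add: mprod_def)
  qed
next
  case (Suc n)
  show ?case
  proof (intro allI impI)
    fix c :: "nat \<Rightarrow> complex" and z :: "nat \<Rightarrow> complex"
    assume h: "\<forall>t. Im t > 0 \<longrightarrow> (\<Sum>k\<le>Suc n. of_nat (Suc n choose k) * c k * t^k) \<noteq> 0"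
      and zH: "\<forall>i<Suc n. Im (z i) > 0"
    define w where "w = z n"
    have wH: "Im w > 0" using zH unfolding w_def by simp
    define c' where "c' k = c k + w * c (Suc k)" for k
    have split: "(\<Sum>S\<in>Pow {..<Suc n}. c (card S) * mprod S z) = (\<Sum>S\<in>Pow {..<n}. c' (card S) * mprod S z)"
    proof -
      have "(\<Sum>S\<in>Pow {..<Suc n}. c (card S) * mprod S z)
          = (\<Sum>S\<in>Pow {..<n}. c (card S) * mprod S z + c (card (insert n S)) * mprod (insert n S) z)"
        unfolding lessThan_Suc by (rule sum_Pow_insert) auto
      also have "\<dots> = (\<Sum>S\<in>Pow {..<n}. c' (card S) * mprod S z)"
      proof (rule sum.cong[OF refl])
        fix S assume "S \<in> Pow {..<n}"
        hence fS: "finite S" and nS: "n \<notin> S" by (auto intro: finite_subset)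
        show "c (card S) * mprod S z + c (card (insert n S)) * mprod (insert n S) z = c' (card S) * mprod S z"
          using fS nS unfolding c'_def w_def by (simp add: mono_insert algebra_simps)
      qed
      finally show ?thesis .
    qed
    have h': "\<forall>t. Im t > 0 \<longrightarrow> (\<Sum>k\<le>n. of_nat (n choose k) * c' k * t^k) \<noteq> 0"
    proof (intro allI impI)
      fix t :: complex assume t: "Im t > 0"
      define Fp where "Fp = (\<Sum>k\<le>Suc n. monom (of_nat (Suc n choose k) * c k) k)"
      have degF: "degree Fp \<le> Suc n" unfolding Fp_def
        by (intro degree_sum_le) (auto intro: order_trans[OF degree_monom_le])
      have stab: "poly Fp z \<noteq> 0" if "Im z > 0" for z
        using h that unfolding Fp_def by (simp add: poly_sum poly_monom)
      have "of_nat (Suc n) * poly Fp t + (w - t) * poly (pderiv Fp) t \<noteq> 0"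
        by (rule laguerre[OF degF _ stab wH t]) simp
      thus "(\<Sum>k\<le>n. of_nat (n choose k) * c' k * t^k) \<noteq> 0"
        unfolding Fp_def laguerre_identity c'_def by simp
    qed
    have zH': "\<forall>i<n. Im (z i) > 0" using zH by simp
    show "(\<Sum>S\<in>Pow {..<Suc n}. c (card S) * mprod S z) \<noteq> 0"
      unfolding split using Suc.IH h' zH' by blast
  qed
qed

lemma gws2:
  fixes c :: "nat \<Rightarrow> nat \<Rightarrow> complex" and x y :: "nat \<Rightarrow> complex"
  assumes diag: "\<And>s t. Im s > 0 \<Longrightarrow> Im t > 0 \<Longrightarrow>
      (\<Sum>a\<le>d. \<Sum>b\<le>m. of_nat (d choose a) * of_nat (m choose b) * c a b * s^a * t^b) \<noteq> 0"
    and xH: "\<forall>i<d. Im (x i) > 0" and yH: "\<forall>j<m. Im (y j) > 0"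
  shows "(\<Sum>S\<in>Pow {..<d}. \<Sum>R\<in>Pow {..<m}. c (card S) (card R) * mprod S x * mprod R y) \<noteq> 0"
proof -
  define c1 where "c1 a = (\<Sum>R\<in>Pow {..<m}. c a (card R) * mprod R y)" for a
  have eq1: "(\<Sum>S\<in>Pow {..<d}. \<Sum>R\<in>Pow {..<m}. c (card S) (card R) * mprod S x * mprod R y)
      = (\<Sum>S\<in>Pow {..<d}. c1 (card S) * mprod S x)"
    unfolding c1_def by (simp add: sum_distrib_left sum_distrib_right mult_ac)
  have "\<forall>t. Im t > 0 \<longrightarrow> (\<Sum>a\<le>d. of_nat (d choose a) * c1 a * t^a) \<noteq> 0"
  proof (intro allI impI)
    fix s :: complex assume s: "Im s > 0"
    define c2 where "c2 b = (\<Sum>a\<le>d. of_nat (d choose a) * c a b * s^a)" for b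
    have eq2: "(\<Sum>a\<le>d. of_nat (d choose a) * c1 a * s^a) = (\<Sum>R\<in>Pow {..<m}. c2 (card R) * mprod R y)"
      unfolding c1_def c2_def by (simp add: sum_distrib_left sum_distrib_right algebra_simps sum.swap[of _ "{..d}"])
    have "\<forall>t. Im t > 0 \<longrightarrow> (\<Sum>b\<le>m. of_nat (m choose b) * c2 b * t^b) \<noteq> 0"
    proof (intro allI impI)
      fix t :: complex assume t: "Im t > 0"
      have "(\<Sum>b\<le>m. of_nat (m choose b) * c2 b * t^b)
          = (\<Sum>a\<le>d. \<Sum>b\<le>m. of_nat (d choose a) * of_nat (m choose b) * c a b * s^a * t^b)"
        unfolding c2_def by (simp add: sum_distrib_left sum_distrib_right algebra_simps sum.swap[of _ "{..m}"])
      thus "(\<Sum>b\<le>m. of_nat (m choose b) * c2 b * t^b) \<noteq> 0" using diag[OF s t] by simp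
    qed
    hence "(\<Sum>R\<in>Pow {..<m}. c2 (card R) * mprod R y) \<noteq> 0" using gws[of m] yH by blast
    thus "(\<Sum>a\<le>d. of_nat (d choose a) * c1 a * s^a) \<noteq> 0" unfolding eq2 .
  qed
  hence "(\<Sum>S\<in>Pow {..<d}. c1 (card S) * mprod S x) \<noteq> 0" using gws[of d] xH by blast
  thus ?thesis unfolding eq1 .
qed



definition FF :: "nat \<Rightarrow> nat \<Rightarrow> (nat set \<Rightarrow> nat set \<Rightarrow> complex) \<Rightarrow> (nat \<Rightarrow> complex) \<Rightarrow> (nat \<Rightarrow> complex) \<Rightarrow> complex" where
  "FF d m \<kappa> x y = (\<Sum>S\<in>Pow {..<d}. \<Sum>R\<in>Pow {..<m}. \<kappa> S R * mprod S x * mprod R y)"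

definition stabl :: "nat \<Rightarrow> nat \<Rightarrow> (nat set \<Rightarrow> nat set \<Rightarrow> complex) \<Rightarrow> bool" where
  "stabl d m \<kappa> \<longleftrightarrow> (\<forall>x y. (\<forall>i<d. Im (x i) > 0) \<longrightarrow> (\<forall>j<m. Im (y j) > 0) \<longrightarrow> FF d m \<kappa> x y \<noteq> 0)"

lemma sum_Pow_remove:
  assumes "finite A" "l \<in> A"
  shows "(\<Sum>S\<in>Pow A. g S) = (\<Sum>S\<in>Pow (A - {l}). g S + g (insert l S))"
  using sum_Pow_insert[of "A - {l}" l g] assms by (simp add: insert_absorb)

lemma sum_Pow_split2:
  fixes d m l :: nat and G :: "nat set \<Rightarrow> nat set \<Rightarrow> complex"
  assumes "l < d" "l < m"
  shows "(\<Sum>S\<in>Pow {..<d}. \<Sum>R\<in>Pow {..<m}. G S R)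
       = (\<Sum>S\<in>Pow ({..<d} - {l}). \<Sum>R\<in>Pow ({..<m} - {l}).
            G S R + G (insert l S) R + G S (insert l R) + G (insert l S) (insert l R))"
proof -
  have d: "{..<d} = insert l ({..<d} - {l})" and m: "{..<m} = insert l ({..<m} - {l})"
    using assms by auto
  have "(\<Sum>S\<in>Pow {..<d}. \<Sum>R\<in>Pow {..<m}. G S R)
      = (\<Sum>S\<in>Pow ({..<d} - {l}). (\<Sum>R\<in>Pow {..<m}. G S R) + (\<Sum>R\<in>Pow {..<m}. G (insert l S) R))"
    using assms by (intro sum_Pow_remove) auto
  also have "\<dots> = (\<Sum>S\<in>Pow ({..<d} - {l}). \<Sum>R\<in>Pow ({..<m} - {l}).
            G S R + G (insert l S) R + G S (insert l R) + G (insert l S) (insert l R))"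
  proof (rule sum.cong[OF refl])
    fix S
    have "(\<Sum>R\<in>Pow {..<m}. G S R) = (\<Sum>R\<in>Pow ({..<m} - {l}). G S R + G S (insert l R))"
      using assms by (intro sum_Pow_remove) auto
    moreover have "(\<Sum>R\<in>Pow {..<m}. G (insert l S) R) = (\<Sum>R\<in>Pow ({..<m} - {l}). G (insert l S) R + G (insert l S) (insert l R))"
      using assms by (intro sum_Pow_remove) auto
    ultimately show "(\<Sum>R\<in>Pow {..<m}. G S R) + (\<Sum>R\<in>Pow {..<m}. G (insert l S) R)
      = (\<Sum>R\<in>Pow ({..<m} - {l}). G S R + G (insert l S) R + G S (insert l R) + G (insert l S) (insert l R))"
      by (simp add: sum.distrib[symmetric] algebra_simps)
  qed
  finally show ?thesis .
qed

lemma mono_upd_notin: "l \<notin> S \<Longrightarrow> mprod S (x(l:=s)) = mprod S x"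
  unfolding mprod_def by (rule prod.cong) auto

lemma mono_upd_insert: "finite S \<Longrightarrow> l \<notin> S \<Longrightarrow> mprod (insert l S) (x(l:=s)) = s * mprod S x"
  by (simp add: mono_insert mono_upd_notin)

definition k00 where "k00 l \<kappa> S R = (if l \<in> S \<or> l \<in> R then 0 else \<kappa> S R)"
definition k10 where "k10 l \<kappa> S R = (if l \<in> S \<or> l \<in> R then 0 else \<kappa> (insert l S) R)"
definition k01 where "k01 l \<kappa> S R = (if l \<in> S \<or> l \<in> R then 0 else \<kappa> S (insert l R))"
definition k11 where "k11 l \<kappa> S R = (if l \<in> S \<or> l \<in> R then 0 else \<kappa> (insert l S) (insert l R))"

lemma FF_restr:
  fixes d m l :: nat
  assumes "l < d" "l < m" and van: "\<And>S R. l \<in> S \<or> l \<in> R \<Longrightarrow> \<kappa> S R = 0"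
  shows "FF d m \<kappa> x y = (\<Sum>S\<in>Pow ({..<d} - {l}). \<Sum>R\<in>Pow ({..<m} - {l}). \<kappa> S R * mprod S x * mprod R y)"
  unfolding FF_def by (subst sum_Pow_split2[OF assms(1,2)]) (simp add: van)

lemma FF_decomp:
  fixes d m l :: nat
  assumes l: "l < d" "l < m"
  shows "FF d m \<kappa> (x(l:=s)) (y(l:=t)) = FF d m (k00 l \<kappa>) x y + s * FF d m (k10 l \<kappa>) x y
          + t * FF d m (k01 l \<kappa>) x y + s * t * FF d m (k11 l \<kappa>) x y"
proof -
  let ?A = "Pow ({..<d} - {l})" and ?B = "Pow ({..<m} - {l})"
  have "FF d m \<kappa> (x(l:=s)) (y(l:=t)) = (\<Sum>S\<in>?A. \<Sum>R\<in>?B.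
         \<kappa> S R * mprod S x * mprod R y + s * (\<kappa> (insert l S) R * mprod S x * mprod R y)
       + t * (\<kappa> S (insert l R) * mprod S x * mprod R y) + s * t * (\<kappa> (insert l S) (insert l R) * mprod S x * mprod R y))"
    unfolding FF_def
  proof (subst sum_Pow_split2[OF l], intro sum.cong refl)
    fix S R assume S: "S \<in> ?A" and R: "R \<in> ?B"
    have fS: "finite S" "l \<notin> S" using S by (auto intro: finite_subset)
    have fR: "finite R" "l \<notin> R" using R by (auto intro: finite_subset)
    show "\<kappa> S R * mprod S (x(l := s)) * mprod R (y(l := t)) +
          \<kappa> (insert l S) R * mprod (insert l S) (x(l := s)) * mprod R (y(l := t)) +
          \<kappa> S (insert l R) * mprod S (x(l := s)) * mprod (insert l R) (y(l := t)) +
          \<kappa> (insert l S) (insert l R) * mprod (insert l S) (x(l := s)) * mprod (insert l R) (y(l := t)) =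
          \<kappa> S R * mprod S x * mprod R y + s * (\<kappa> (insert l S) R * mprod S x * mprod R y) +
          t * (\<kappa> S (insert l R) * mprod S x * mprod R y) +
          s * t * (\<kappa> (insert l S) (insert l R) * mprod S x * mprod R y)"
      using fS fR by (simp add: mono_upd_notin mono_upd_insert algebra_simps)
  qed
  also have "\<dots> = FF d m (k00 l \<kappa>) x y + s * FF d m (k10 l \<kappa>) x y
          + t * FF d m (k01 l \<kappa>) x y + s * t * FF d m (k11 l \<kappa>) x y"
  proof -
    have e00: "FF d m (k00 l \<kappa>) x y = (\<Sum>S\<in>?A. \<Sum>R\<in>?B. \<kappa> S R * mprod S x * mprod R y)"
      by (subst FF_restr[OF l]) (auto simp: k00_def intro!: sum.cong)
    have e10: "FF d m (k10 l \<kappa>) x y = (\<Sum>S\<in>?A. \<Sum>R\<in>?B. \<kappa> (insert l S) R * mprod S x * mprod R y)"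
      by (subst FF_restr[OF l]) (auto simp: k10_def intro!: sum.cong)
    have e01: "FF d m (k01 l \<kappa>) x y = (\<Sum>S\<in>?A. \<Sum>R\<in>?B. \<kappa> S (insert l R) * mprod S x * mprod R y)"
      by (subst FF_restr[OF l]) (auto simp: k01_def intro!: sum.cong)
    have e11: "FF d m (k11 l \<kappa>) x y = (\<Sum>S\<in>?A. \<Sum>R\<in>?B. \<kappa> (insert l S) (insert l R) * mprod S x * mprod R y)"
      by (subst FF_restr[OF l]) (auto simp: k11_def intro!: sum.cong)
    show ?thesis unfolding e00 e10 e01 e11
      by (simp add: sum.distrib sum_distrib_left)
  qed
  finally show ?thesis .
qed

lemma FF_linear: "FF d m (\<lambda>S R. \<kappa> S R - \<beta> * \<mu> S R) x y = FF d m \<kappa> x y - \<beta> * FF d m \<mu> x y"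
  unfolding FF_def by (simp add: sum_subtractf sum_distrib_left algebra_simps)

definition stepk :: "nat \<Rightarrow> complex \<Rightarrow> (nat set \<Rightarrow> nat set \<Rightarrow> complex) \<Rightarrow> (nat set \<Rightarrow> nat set \<Rightarrow> complex)" where
  "stepk l \<beta> \<kappa> = (\<lambda>S R. \<kappa> S R - \<beta> * k11 l \<kappa> S R)"

lemma stepk_stable:
  assumes st: "stabl d m \<kappa>" and l: "l < d" "l < m" and \<beta>: "Im \<beta> = 0" "Re \<beta> \<ge> 0"
  shows "stabl d m (stepk l \<beta> \<kappa>)"
  unfolding stabl_def
proof (intro allI impI)
  fix x y :: "nat \<Rightarrow> complex"
  assume xH: "\<forall>i<d. Im (x i) > 0" and yH: "\<forall>j<m. Im (y j) > 0"
  define a where "a = FF d m (k00 l \<kappa>) x y"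
  define b where "b = FF d m (k10 l \<kappa>) x y"
  define c where "c = FF d m (k01 l \<kappa>) x y"
  define e where "e = FF d m (k11 l \<kappa>) x y"
  have H: "a + b * s + c * t + e * s * t \<noteq> 0" if s: "Im s > 0" and t: "Im t > 0" for s t
  proof -
    have "(\<forall>i<d. Im ((x(l:=s)) i) > 0)" using xH s by auto
    moreover have "(\<forall>j<m. Im ((y(l:=t)) j) > 0)" using yH t by auto
    ultimately have "FF d m \<kappa> (x(l:=s)) (y(l:=t)) \<noteq> 0" using st unfolding stabl_def by blast
    thus ?thesis unfolding FF_decomp[OF l] a_def b_def c_def e_def by (simp add: algebra_simps)
  qed
  have "a + b * x l + c * y l + e * x l * y l - \<beta> * e \<noteq> 0"
    using pair_lemma[OF H \<beta>] xH yH l by blast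
  moreover have "FF d m \<kappa> x y = a + b * x l + c * y l + e * x l * y l"
    using FF_decomp[OF l, of \<kappa> x "x l" y "y l"] unfolding a_def b_def c_def e_def
    by (simp add: algebra_simps)
  ultimately show "FF d m (stepk l \<beta> \<kappa>) x y \<noteq> 0"
    unfolding stepk_def FF_linear e_def by simp
qed

fun KK :: "(nat set \<Rightarrow> nat set \<Rightarrow> complex) \<Rightarrow> (nat \<Rightarrow> complex) \<Rightarrow> nat \<Rightarrow> (nat set \<Rightarrow> nat set \<Rightarrow> complex)" where
  "KK \<kappa> \<beta> 0 = \<kappa>"
| "KK \<kappa> \<beta> (Suc k) = stepk k (\<beta> k) (KK \<kappa> \<beta> k)"

lemma KK_stable:
  assumes "stabl d m \<kappa>" "d \<le> m" "\<And>l. Im (\<beta> l) = 0" "\<And>l. Re (\<beta> l) \<ge> 0"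
  shows "k \<le> d \<Longrightarrow> stabl d m (KK \<kappa> \<beta> k)"
proof (induction k)
  case 0 then show ?case using assms by simp
next
  case (Suc k)
  then show ?case using assms by (simp add: stepk_stable)
qed

lemma KK_closed:
  "KK \<kappa> \<beta> k S R = (\<Sum>L\<in>Pow {..<k}. if L \<inter> S = {} \<and> L \<inter> R = {}
      then (\<Prod>l\<in>L. - \<beta> l) * \<kappa> (S \<union> L) (R \<union> L) else 0)"
proof (induction k arbitrary: S R)
  case 0
  then show ?case by simp
next
  case (Suc k)
  have fin: "finite {..<k}" by simp
  have "(\<Sum>L\<in>Pow {..<Suc k}. if L \<inter> S = {} \<and> L \<inter> R = {} then (\<Prod>l\<in>L. - \<beta> l) * \<kappa> (S \<union> L) (R \<union> L) else 0)
      = (\<Sum>L\<in>Pow {..<k}. (if L \<inter> S = {} \<and> L \<inter> R = {} then (\<Prod>l\<in>L. - \<beta> l) * \<kappa> (S \<union> L) (R \<union> L) else 0)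
          + (if insert k L \<inter> S = {} \<and> insert k L \<inter> R = {} then (\<Prod>l\<in>insert k L. - \<beta> l) * \<kappa> (S \<union> insert k L) (R \<union> insert k L) else 0))"
    unfolding lessThan_Suc by (rule sum_Pow_insert) auto
  also have "\<dots> = KK \<kappa> \<beta> k S R - \<beta> k * k11 k (KK \<kappa> \<beta> k) S R"
  proof -
    have "(\<Sum>L\<in>Pow {..<k}. (if insert k L \<inter> S = {} \<and> insert k L \<inter> R = {} then (\<Prod>l\<in>insert k L. - \<beta> l) * \<kappa> (S \<union> insert k L) (R \<union> insert k L) else 0))
        = - \<beta> k * k11 k (KK \<kappa> \<beta> k) S R"
    proof (cases "k \<in> S \<or> k \<in> R")
      case True
      then show ?thesis by (auto simp: k11_def)
    next
      case False
      have "k11 k (KK \<kappa> \<beta> k) S R = KK \<kappa> \<beta> k (insert k S) (insert k R)"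
        using False by (simp add: k11_def)
      also have "\<dots> = (\<Sum>L\<in>Pow {..<k}. if L \<inter> insert k S = {} \<and> L \<inter> insert k R = {}
          then (\<Prod>l\<in>L. - \<beta> l) * \<kappa> (insert k S \<union> L) (insert k R \<union> L) else 0)"
        by (rule Suc.IH)
      finally have E: "k11 k (KK \<kappa> \<beta> k) S R = \<dots>" .
      show ?thesis unfolding E sum_distrib_left
      proof (rule sum.cong[OF refl])
        fix L assume L: "L \<in> Pow {..<k}"
        hence fL: "finite L" and kL: "k \<notin> L" by (auto intro: finite_subset)
        have i1: "(insert k L \<inter> S = {} \<and> insert k L \<inter> R = {}) = (L \<inter> insert k S = {} \<and> L \<inter> insert k R = {})"
          using False kL by auto
        show "(if insert k L \<inter> S = {} \<and> insert k L \<inter> R = {} then (\<Prod>l\<in>insert k L. - \<beta> l) * \<kappa> (S \<union> insert k L) (R \<union> insert k L) else 0) =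
          - \<beta> k * (if L \<inter> insert k S = {} \<and> L \<inter> insert k R = {} then (\<Prod>l\<in>L. - \<beta> l) * \<kappa> (insert k S \<union> L) (insert k R \<union> L) else 0)"
          unfolding i1 using fL kL by simp
      qed
    qed
    thus ?thesis using Suc.IH[of S R] by (simp add: sum.distrib)
  qed
  finally show ?case by (simp add: stepk_def)
qed



lemma mono_const: "finite S \<Longrightarrow> mprod S (\<lambda>_. x) = x ^ card S"
  unfolding mprod_def by simp

lemma sum_Pow_card:
  fixes f :: "nat \<Rightarrow> complex"
  assumes "finite A"
  shows "(\<Sum>S\<in>Pow A. f (card S)) = (\<Sum>a\<le>card A. of_nat (card A choose a) * f a)"
proof -
  have "(\<Sum>S\<in>Pow A. f (card S)) = (\<Sum>a\<le>card A. \<Sum>S\<in>{S\<in>Pow A. card S = a}. f (card S))"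
    using assms by (intro sum.group[symmetric]) (auto intro: card_mono)
  also have "\<dots> = (\<Sum>a\<le>card A. of_nat (card A choose a) * f a)"
  proof (rule sum.cong[OF refl])
    fix a
    have "{S\<in>Pow A. card S = a} = {S. S \<subseteq> A \<and> card S = a}" by auto
    hence "card {S\<in>Pow A. card S = a} = card A choose a" using n_subsets[OF assms] by simp
    thus "(\<Sum>S\<in>{S\<in>Pow A. card S = a}. f (card S)) = of_nat (card A choose a) * f a"
      by simp
  qed
  finally show ?thesis .
qed

lemma sum_Pow_group_card:
  fixes h :: "nat set \<Rightarrow> complex"
  assumes "finite A"
  shows "(\<Sum>L\<in>Pow A. h L) = (\<Sum>j\<le>card A. \<Sum>L\<in>{L\<in>Pow A. card L = j}. h L)"
  using assms by (intro sum.group[symmetric]) (auto intro: card_mono)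

lemma sum_Pow_disj:
  fixes h :: "nat set \<Rightarrow> complex"
  assumes "finite A"
  shows "(\<Sum>S\<in>Pow A. if L \<inter> S = {} then h S else 0) = (\<Sum>S\<in>Pow (A - L). h S)"
proof -
  have "(\<Sum>S\<in>Pow A. if L \<inter> S = {} then h S else 0) = (\<Sum>S\<in>{S\<in>Pow A. L \<inter> S = {}}. h S)"
    by (rule sum.inter_filter[symmetric]) (use assms in simp)
  also have "{S\<in>Pow A. L \<inter> S = {}} = Pow (A - L)" by auto
  finally show ?thesis .
qed

lemma tri_swap:
  fixes f :: "nat \<Rightarrow> nat \<Rightarrow> complex"
  shows "(\<Sum>j\<le>d. \<Sum>k\<in>{j..d}. f j k) = (\<Sum>k\<le>d. \<Sum>j\<le>k. f j k)"
proof -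
  have "(\<Sum>j\<le>d. \<Sum>k\<in>{j..d}. f j k) = (\<Sum>j\<le>d. \<Sum>k\<in>{k\<in>{..d}. j \<le> k}. f j k)"
    by (intro sum.cong refl) auto
  also have "\<dots> = (\<Sum>k\<le>d. \<Sum>j\<in>{j\<in>{..d}. j \<le> k}. f j k)"
    by (rule sum.swap_restrict) auto
  also have "\<dots> = (\<Sum>k\<le>d. \<Sum>j\<le>k. f j k)"
    by (intro sum.cong refl) auto
  finally show ?thesis .
qed

lemma sum_rev_to:
  fixes g :: "nat \<Rightarrow> complex"
  assumes "j \<le> d"
  shows "(\<Sum>a\<le>d - j. g a) = (\<Sum>k\<in>{j..d}. g (d - k))"
  by (rule sum.reindex_bij_witness[of _ "\<lambda>k. d - k" "\<lambda>a. d - a"]) (use assms in auto)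

lemma sum_rev_atMost:
  fixes g :: "nat \<Rightarrow> complex"
  shows "(\<Sum>i\<le>k. g i) = (\<Sum>j\<le>k. g (k - j))"
  by (rule sum.reindex_bij_witness[of _ "\<lambda>j. k - j" "\<lambda>i. k - i"]) auto

lemma map_poly_of_real_add: "map_poly complex_of_real (p + q) = map_poly complex_of_real p + map_poly complex_of_real q"
  by (intro poly_eqI) (simp add: coeff_map_poly)

lemma map_poly_sum_monom:
  "map_poly (complex_of_real) (\<Sum>k\<in>A. monom (r k) (n k)) = (\<Sum>k\<in>A. monom (complex_of_real (r k)) (n k))"
proof (induction A rule: infinite_finite_induct)
  case (insert a A)
  then show ?case by (simp add: map_poly_monom map_poly_of_real_add)
qed simp_all

lemma vieta_poly:
  fixes \<beta> :: "nat \<Rightarrow> complex"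
  shows "(\<Prod>i<D. [:-\<beta> i, 1:]) = (\<Sum>L\<in>Pow {..<D}. monom (\<Prod>l\<in>L. - \<beta> l) (D - card L))"
proof (induction D)
  case 0 then show ?case by (simp add: monom_0)
next
  case (Suc D)
  have "(\<Prod>i<Suc D. [:-\<beta> i, 1:]) = (\<Sum>L\<in>Pow {..<D}. monom (\<Prod>l\<in>L. - \<beta> l) (D - card L)) * [:-\<beta> D, 1:]"
    using Suc by simp
  also have "\<dots> = (\<Sum>L\<in>Pow {..<D}. monom (\<Prod>l\<in>L. - \<beta> l) (D - card L) * [:-\<beta> D, 1:])"
    by (rule sum_distrib_right)
  also have "\<dots> = (\<Sum>L\<in>Pow {..<D}. monom (\<Prod>l\<in>L. - \<beta> l) (Suc D - card L) + monom (\<Prod>l\<in>insert D L. - \<beta> l) (Suc D - card (insert D L)))"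
  proof (rule sum.cong[OF refl])
    fix L assume L: "L \<in> Pow {..<D}"
    hence fL: "finite L" and DL: "D \<notin> L" and cL: "card L \<le> D"
      using card_mono[of "{..<D}" L] by (auto intro: finite_subset)
    have "monom c n * [:-b, 1:] = monom c (Suc n) + monom (- b * c) n" for c b :: complex and n
      by (simp add: monom_altdef smult_diff_right mult.commute)
    hence "monom (\<Prod>l\<in>L. - \<beta> l) (D - card L) * [:-\<beta> D, 1:]
         = monom (\<Prod>l\<in>L. - \<beta> l) (Suc (D - card L)) + monom (- \<beta> D * (\<Prod>l\<in>L. - \<beta> l)) (D - card L)" .
    moreover have "Suc (D - card L) = Suc D - card L" using cL by simp
    moreover have "Suc D - card (insert D L) = D - card L" using fL DL by simp
    moreover have "(\<Prod>l\<in>insert D L. - \<beta> l) = - \<beta> D * (\<Prod>l\<in>L. - \<beta> l)" using fL DL by simp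
    ultimately show "monom (\<Prod>l\<in>L. - \<beta> l) (D - card L) * [:-\<beta> D, 1:]
       = monom (\<Prod>l\<in>L. - \<beta> l) (Suc D - card L) + monom (\<Prod>l\<in>insert D L. - \<beta> l) (Suc D - card (insert D L))"
      by simp
  qed
  also have "\<dots> = (\<Sum>L\<in>Pow {..<Suc D}. monom (\<Prod>l\<in>L. - \<beta> l) (Suc D - card L))"
    unfolding lessThan_Suc by (rule sum_Pow_insert[symmetric]) auto
  finally show ?case .
qed

lemma vieta_coeff:
  fixes \<beta> :: "nat \<Rightarrow> complex"
  assumes "j \<le> D"
  shows "coeff (\<Prod>i<D. [:-\<beta> i, 1:]) (D - j) = (\<Sum>L\<in>{L\<in>Pow {..<D}. card L = j}. \<Prod>l\<in>L. - \<beta> l)"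
proof -
  have "coeff (\<Prod>i<D. [:-\<beta> i, 1:]) (D - j) = (\<Sum>L\<in>Pow {..<D}. if D - card L = D - j then (\<Prod>l\<in>L. - \<beta> l) else 0)"
    unfolding vieta_poly by (simp add: coeff_sum coeff_monom)
  also have "\<dots> = (\<Sum>L\<in>Pow {..<D}. if card L = j then (\<Prod>l\<in>L. - \<beta> l) else 0)"
  proof (rule sum.cong[OF refl])
    fix L assume "L \<in> Pow {..<D}"
    hence "card L \<le> D" using card_mono[of "{..<D}" L] by auto
    hence "(D - card L = D - j) = (card L = j)" using assms by auto
    thus "(if D - card L = D - j then (\<Prod>l\<in>L. - \<beta> l) else 0) = (if card L = j then (\<Prod>l\<in>L. - \<beta> l) else 0)"
      by simp
  qed
  also have "\<dots> = (\<Sum>L\<in>{L\<in>Pow {..<D}. card L = j}. \<Prod>l\<in>L. - \<beta> l)"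
    by (rule sum.inter_filter[symmetric]) simp
  finally show ?thesis .
qed



lemma FF_const: "FF d m \<kappa> (\<lambda>_. x) (\<lambda>_. y) = (\<Sum>S\<in>Pow {..<d}. \<Sum>R\<in>Pow {..<m}. \<kappa> S R * x ^ card S * y ^ card R)"
  unfolding FF_def
  by (intro sum.cong refl) (simp add: mono_const finite_subset[of _ "{..<d}"] finite_subset[of _ "{..<m}"])

lemma diag_KK:
  fixes cc :: "nat \<Rightarrow> nat \<Rightarrow> complex" and \<beta> :: "nat \<Rightarrow> complex"
  assumes dm: "d \<le> m"
  shows "FF d m (KK (\<lambda>S R. cc (card S) (card R)) \<beta> d) (\<lambda>_. x) (\<lambda>_. y)
    = (\<Sum>j\<le>d. (\<Sum>L\<in>{L\<in>Pow {..<d}. card L = j}. \<Prod>l\<in>L. - \<beta> l) *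
         (\<Sum>a\<le>d - j. of_nat (d - j choose a) * x ^ a *
            (\<Sum>b\<le>m - j. of_nat (m - j choose b) * cc (a + j) (b + j) * y ^ b)))"
proof -
  define T where "T L = (\<Prod>l\<in>L. - \<beta> l)" for L
  define G where "G j = (\<Sum>a\<le>d - j. of_nat (d - j choose a) * x ^ a *
            (\<Sum>b\<le>m - j. of_nat (m - j choose b) * cc (a + j) (b + j) * y ^ b))" for j
  have step1: "FF d m (KK (\<lambda>S R. cc (card S) (card R)) \<beta> d) (\<lambda>_. x) (\<lambda>_. y)
     = (\<Sum>S\<in>Pow {..<d}. \<Sum>R\<in>Pow {..<m}. \<Sum>L\<in>Pow {..<d}.
          if L \<inter> S = {} then (if L \<inter> R = {} then T L * cc (card S + card L) (card R + card L) * x ^ card S * y ^ card R else 0) else 0)"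
    unfolding FF_const KK_closed
  proof (intro sum.cong refl)
    fix S R assume S: "S \<in> Pow {..<d}" and R: "R \<in> Pow {..<m}"
    have fS: "finite S" and fR: "finite R" using S R by (auto intro: finite_subset)
    show "(\<Sum>L\<in>Pow {..<d}. if L \<inter> S = {} \<and> L \<inter> R = {} then (\<Prod>l\<in>L. - \<beta> l) * cc (card (S \<union> L)) (card (R \<union> L)) else 0) * x ^ card S * y ^ card R
      = (\<Sum>L\<in>Pow {..<d}. if L \<inter> S = {} then (if L \<inter> R = {} then T L * cc (card S + card L) (card R + card L) * x ^ card S * y ^ card R else 0) else 0)"
      unfolding sum_distrib_right
    proof (intro sum.cong refl)
      fix L assume L: "L \<in> Pow {..<d}"
      have fL: "finite L" using L by (auto intro: finite_subset)
      show "(if L \<inter> S = {} \<and> L \<inter> R = {} then (\<Prod>l\<in>L. - \<beta> l) * cc (card (S \<union> L)) (card (R \<union> L)) else 0) * x ^ card S * y ^ card R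
        = (if L \<inter> S = {} then (if L \<inter> R = {} then T L * cc (card S + card L) (card R + card L) * x ^ card S * y ^ card R else 0) else 0)"
        using fS fR fL by (auto simp: T_def card_Un_disjoint Int_commute)
    qed
  qed
  also have "\<dots> = (\<Sum>L\<in>Pow {..<d}. \<Sum>S\<in>Pow {..<d}. if L \<inter> S = {} then
        (\<Sum>R\<in>Pow {..<m}. if L \<inter> R = {} then T L * cc (card S + card L) (card R + card L) * x ^ card S * y ^ card R else 0) else 0)"
  proof -
    let ?f = "\<lambda>S R L. if L \<inter> S = {} then (if L \<inter> R = {} then T L * cc (card S + card L) (card R + card L) * x ^ card S * y ^ card R else 0) else 0"
    have "(\<Sum>S\<in>Pow {..<d}. \<Sum>R\<in>Pow {..<m}. \<Sum>L\<in>Pow {..<d}. ?f S R L) = (\<Sum>S\<in>Pow {..<d}. \<Sum>L\<in>Pow {..<d}. \<Sum>R\<in>Pow {..<m}. ?f S R L)"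
      by (rule sum.cong[OF refl], rule sum.swap)
    also have "\<dots> = (\<Sum>L\<in>Pow {..<d}. \<Sum>S\<in>Pow {..<d}. \<Sum>R\<in>Pow {..<m}. ?f S R L)"
      by (rule sum.swap)
    also have "\<dots> = (\<Sum>L\<in>Pow {..<d}. \<Sum>S\<in>Pow {..<d}. if L \<inter> S = {} then
        (\<Sum>R\<in>Pow {..<m}. if L \<inter> R = {} then T L * cc (card S + card L) (card R + card L) * x ^ card S * y ^ card R else 0) else 0)"
      by (rule sum.cong[OF refl], rule sum.cong[OF refl]) simp
    finally show ?thesis .
  qed
  also have "\<dots> = (\<Sum>L\<in>Pow {..<d}. T L * G (card L))"
  proof (rule sum.cong[OF refl])
    fix L assume L: "L \<in> Pow {..<d}"
    have Ld: "L \<subseteq> {..<d}" and Lm: "L \<subseteq> {..<m}" using L dm by auto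
    have fL: "finite L" using L by (auto intro: finite_subset)
    have cd: "card ({..<d} - L) = d - card L" using Ld fL by (simp add: card_Diff_subset)
    have cm: "card ({..<m} - L) = m - card L" using Lm fL by (simp add: card_Diff_subset)
    have "(\<Sum>S\<in>Pow {..<d}. if L \<inter> S = {} then
        (\<Sum>R\<in>Pow {..<m}. if L \<inter> R = {} then T L * cc (card S + card L) (card R + card L) * x ^ card S * y ^ card R else 0) else 0)
      = (\<Sum>S\<in>Pow ({..<d} - L). \<Sum>R\<in>Pow ({..<m} - L). T L * cc (card S + card L) (card R + card L) * x ^ card S * y ^ card R)"
      by (simp add: sum_Pow_disj)
    also have "\<dots> = T L * (\<Sum>S\<in>Pow ({..<d} - L). x ^ card S * (\<Sum>R\<in>Pow ({..<m} - L). cc (card S + card L) (card R + card L) * y ^ card R))"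
      by (simp add: sum_distrib_left mult_ac)
    also have "\<dots> = T L * G (card L)"
    proof -
      have inner: "(\<Sum>R\<in>Pow ({..<m} - L). cc (s + card L) (card R + card L) * y ^ card R)
          = (\<Sum>b\<le>m - card L. of_nat (m - card L choose b) * cc (s + card L) (b + card L) * y ^ b)" for s
        using sum_Pow_card[of "{..<m} - L" "\<lambda>r. cc (s + card L) (r + card L) * y ^ r"]
        by (simp add: cm mult_ac)
      have "(\<Sum>S\<in>Pow ({..<d} - L). x ^ card S * (\<Sum>R\<in>Pow ({..<m} - L). cc (card S + card L) (card R + card L) * y ^ card R))
        = (\<Sum>S\<in>Pow ({..<d} - L). x ^ card S * (\<Sum>b\<le>m - card L. of_nat (m - card L choose b) * cc (card S + card L) (b + card L) * y ^ b))"
        by (simp only: inner)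
      also have "\<dots> = G (card L)"
        using sum_Pow_card[of "{..<d} - L" "\<lambda>s. x ^ s * (\<Sum>b\<le>m - card L. of_nat (m - card L choose b) * cc (s + card L) (b + card L) * y ^ b)"]
        unfolding G_def by (simp add: cd mult_ac)
      finally show ?thesis by simp
    qed
    finally show "(\<Sum>S\<in>Pow {..<d}. if L \<inter> S = {} then
        (\<Sum>R\<in>Pow {..<m}. if L \<inter> R = {} then T L * cc (card S + card L) (card R + card L) * x ^ card S * y ^ card R else 0) else 0)
       = T L * G (card L)" .
  qed
  also have "\<dots> = (\<Sum>j\<le>d. \<Sum>L\<in>{L\<in>Pow {..<d}. card L = j}. T L * G (card L))"
    using sum_Pow_group_card[of "{..<d}" "\<lambda>L. T L * G (card L)"] by simp
  also have "\<dots> = (\<Sum>j\<le>d. (\<Sum>L\<in>{L\<in>Pow {..<d}. card L = j}. T L) * G j)"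
    by (intro sum.cong refl) (simp add: sum_distrib_right)
  finally show ?thesis unfolding T_def G_def .
qed



definition ccf :: "nat \<Rightarrow> nat \<Rightarrow> (nat \<Rightarrow> complex) \<Rightarrow> nat \<Rightarrow> nat \<Rightarrow> complex" where
  "ccf d m cp a b = (if b = a + (m - d) then cp a / (of_nat (d choose a) * of_nat (m choose b)) else 0)"

lemma binom_ratio:
  assumes "j \<le> k" "k \<le> n"
  shows "(of_nat (n - j choose (n - k)) :: complex) / of_nat (n choose (n - (k - j)))
       = (fact (n - (k - j)) * fact (n - j)) / (fact n * fact (n - k))"
proof -
  have e1: "(n - j) - (n - k) = k - j" and e2: "n - (n - (k - j)) = k - j" using assms by auto
  have b1: "(of_nat (n - j choose (n - k)) :: complex) = fact (n - j) / (fact (n - k) * fact (k - j))"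
    using binomial_fact[of "n - k" "n - j", where 'a=complex] assms e1 by simp
  have b2: "(of_nat (n choose (n - (k - j))) :: complex) = fact n / (fact (n - (k - j)) * fact (k - j))"
    using binomial_fact[of "n - (k - j)" n, where 'a=complex] assms e2 by simp
  show ?thesis unfolding b1 b2 by (simp add: field_simps)
qed

lemma main_identity:
  fixes p q :: "real poly" and \<beta> :: "nat \<Rightarrow> complex" and x y :: complex
  assumes dm: "d \<le> m" and qf: "map_poly complex_of_real q = (\<Prod>i<d. [:-\<beta> i, 1:])"
  shows "FF d m (KK (\<lambda>S R. ccf d m (\<lambda>a. of_real (coeff p a)) (card S) (card R)) \<beta> d) (\<lambda>_. x) (\<lambda>_. y)
       = y ^ (m - d) * poly (map_poly complex_of_real (rect_conv d m p q)) (x * y)"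
proof -
  define e where "e = m - d"
  define cp where "cp a = complex_of_real (coeff p a)" for a
  define Qc where "Qc j = (\<Sum>L\<in>{L\<in>Pow {..<d}. card L = j}. \<Prod>l\<in>L. - \<beta> l)" for j
  have Qc: "Qc j = complex_of_real (coeff q (d - j))" if "j \<le> d" for j
  proof -
    have "complex_of_real (coeff q (d - j)) = coeff (map_poly complex_of_real q) (d - j)"
      by (simp add: coeff_map_poly)
    also have "\<dots> = Qc j" unfolding qf Qc_def by (rule vieta_coeff[OF that])
    finally show ?thesis by simp
  qed
  define h where "h j a = Qc j * of_nat (d - j choose a) * of_nat (m - j choose (a + e)) * cp (a + j)
        / (of_nat (d choose (a + j)) * of_nat (m choose (a + j + e))) * x ^ a * y ^ (a + e)" for j a
  have L1: "FF d m (KK (\<lambda>S R. ccf d m cp (card S) (card R)) \<beta> d) (\<lambda>_. x) (\<lambda>_. y)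
      = (\<Sum>j\<le>d. \<Sum>a\<le>d - j. h j a)"
    unfolding diag_KK[OF dm] Qc_def[symmetric]
  proof (rule sum.cong[OF refl])
    fix j assume j: "j \<in> {..d}"
    show "Qc j * (\<Sum>a\<le>d - j. of_nat (d - j choose a) * x ^ a *
            (\<Sum>b\<le>m - j. of_nat (m - j choose b) * ccf d m cp (a + j) (b + j) * y ^ b)) = (\<Sum>a\<le>d - j. h j a)"
      unfolding sum_distrib_left[of "Qc j"]
    proof (rule sum.cong[OF refl])
      fix a assume a: "a \<in> {..d - j}"
      have ae: "a + e \<le> m - j" using a j dm unfolding e_def by auto
      have "(\<Sum>b\<le>m - j. of_nat (m - j choose b) * ccf d m cp (a + j) (b + j) * y ^ b)
          = (\<Sum>b\<le>m - j. if b = a + e then of_nat (m - j choose b) * (cp (a + j) / (of_nat (d choose (a + j)) * of_nat (m choose (a + j + e)))) * y ^ b else 0)"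
        unfolding ccf_def e_def by (intro sum.cong refl) (auto simp: add.commute add.left_commute)
      also have "\<dots> = of_nat (m - j choose (a + e)) * (cp (a + j) / (of_nat (d choose (a + j)) * of_nat (m choose (a + j + e)))) * y ^ (a + e)"
        using ae by (simp add: sum.delta)
      finally have "(\<Sum>b\<le>m - j. of_nat (m - j choose b) * ccf d m cp (a + j) (b + j) * y ^ b) = \<dots>" .
      thus "Qc j * (of_nat (d - j choose a) * x ^ a *
            (\<Sum>b\<le>m - j. of_nat (m - j choose b) * ccf d m cp (a + j) (b + j) * y ^ b)) = h j a"
        unfolding h_def by simp
    qed
  qed
  also have "\<dots> = (\<Sum>j\<le>d. \<Sum>k\<in>{j..d}. h j (d - k))"
    by (intro sum.cong refl sum_rev_to) auto
  also have "\<dots> = (\<Sum>k\<le>d. \<Sum>j\<le>k. h j (d - k))"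
    by (rule tri_swap)
  finally have LHS: "FF d m (KK (\<lambda>S R. ccf d m cp (card S) (card R)) \<beta> d) (\<lambda>_. x) (\<lambda>_. y)
      = (\<Sum>k\<le>d. \<Sum>j\<le>k. h j (d - k))" .
  define W :: "nat \<Rightarrow> nat \<Rightarrow> nat \<Rightarrow> real" where "W i j k = (fact (d - i) * fact (d - j)) / (fact d * fact (d - k)) *
           ((fact (m - i) * fact (m - j)) / (fact m * fact (m - k)))" for i j k
  have RHS: "y ^ (m - d) * poly (map_poly complex_of_real (rect_conv d m p q)) (x * y)
      = (\<Sum>k\<le>d. \<Sum>j\<le>k. h j (d - k))"
  proof -
    have "y ^ (m - d) * poly (map_poly complex_of_real (rect_conv d m p q)) (x * y)
        = (\<Sum>k\<le>d. y ^ (m - d) * (complex_of_real ((-1) ^ k *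
            (\<Sum>i\<in>{0..k}. let j = k - i in W i j k * sgn_coeff d p i * sgn_coeff d q j)) * (x * y) ^ (d - k)))"
      unfolding rect_conv_def map_poly_sum_monom poly_sum poly_monom W_def
      by (simp add: sum_distrib_left atLeast0AtMost)
    also have "\<dots> = (\<Sum>k\<le>d. \<Sum>j\<le>k. h j (d - k))"
    proof (rule sum.cong[OF refl])
      fix k assume k: "k \<in> {..d}"
      have "complex_of_real ((-1) ^ k * (\<Sum>i\<in>{0..k}. let j = k - i in W i j k * sgn_coeff d p i * sgn_coeff d q j))
          = (\<Sum>i\<le>k. (-1) ^ k * complex_of_real (W i (k - i) k * sgn_coeff d p i * sgn_coeff d q (k - i)))"
        by (simp add: sum_distrib_left atLeast0AtMost Let_def)
      also have "\<dots> = (\<Sum>j\<le>k. (-1) ^ k * complex_of_real (W (k - j) (k - (k - j)) k * sgn_coeff d p (k - j) * sgn_coeff d q (k - (k - j))))"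
        by (rule sum_rev_atMost)
      finally have E: "complex_of_real ((-1) ^ k * (\<Sum>i\<in>{0..k}. let j = k - i in W i j k * sgn_coeff d p i * sgn_coeff d q j))
          = (\<Sum>j\<le>k. (-1) ^ k * complex_of_real (W (k - j) (k - (k - j)) k * sgn_coeff d p (k - j) * sgn_coeff d q (k - (k - j))))" .
      show "y ^ (m - d) * (complex_of_real ((-1) ^ k * (\<Sum>i\<in>{0..k}. let j = k - i in W i j k * sgn_coeff d p i * sgn_coeff d q j)) * (x * y) ^ (d - k))
          = (\<Sum>j\<le>k. h j (d - k))"
        unfolding E sum_distrib_left[of "y ^ (m - d)"] sum_distrib_right[of _ _ "(x * y) ^ (d - k)"]
      proof (rule sum.cong[OF refl], goal_cases)
        case (1 j)
        hence j: "j \<in> {..k}" by simp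
        have jk: "j \<le> k" and kd: "k \<le> d" using j k by auto
        have kk: "k - (k - j) = j" using jk by simp
        have n1: "d - k + j = d - (k - j)" and n2: "d - k + e = m - k" and n3: "d - k + j + e = m - (k - j)"
          using jk kd dm unfolding e_def by auto
        have n4: "d - (k - j) + e = m - (k - j)" using jk kd dm unfolding e_def by auto
        have sp: "complex_of_real (sgn_coeff d p (k - j)) = (-1) ^ (k - j) * cp (d - (k - j))"
          unfolding sgn_coeff_def cp_def by simp
        have sq: "complex_of_real (sgn_coeff d q j) = (-1) ^ j * Qc j"
          unfolding sgn_coeff_def using Qc[of j] jk kd by simp
        have sign: "(-1::complex) ^ k * ((-1) ^ (k - j) * (-1) ^ j) = 1"
        proof -
          have "(-1::complex) ^ (k - j) * (-1) ^ j = (-1) ^ k" using jk by (simp add: power_add[symmetric])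
          thus ?thesis by (simp add: power_add[symmetric] power_even_eq)
        qed
        have Wc: "complex_of_real (W (k - j) j k) = of_nat (d - j choose (d - k)) / of_nat (d choose (d - (k - j)))
                  * (of_nat (m - j choose (m - k)) / of_nat (m choose (m - (k - j))))"
          unfolding W_def using binom_ratio[OF jk kd] binom_ratio[of j k m] jk kd dm
          by (simp add: of_real_fact)
        have xy: "y ^ (m - d) * (x * y) ^ (d - k) = x ^ (d - k) * y ^ (m - k)"
          using kd dm by (simp add: power_mult_distrib power_add[symmetric])
        have hh: "h j (d - k) = Qc j * of_nat (d - j choose (d - k)) * of_nat (m - j choose (m - k)) * cp (d - (k - j))
              / (of_nat (d choose (d - (k - j))) * of_nat (m choose (m - (k - j)))) * x ^ (d - k) * y ^ (m - k)"
          unfolding h_def n1 n2 n4 ..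
        have FIN: "y ^ (m - d) * ((-1) ^ k * complex_of_real (W (k - j) (k - (k - j)) k * sgn_coeff d p (k - j) * sgn_coeff d q (k - (k - j)))) * (x * y) ^ (d - k)
            = h j (d - k)"
        proof -
          have "y ^ (m - d) * ((-1) ^ k * complex_of_real (W (k - j) (k - (k - j)) k * sgn_coeff d p (k - j) * sgn_coeff d q (k - (k - j)))) * (x * y) ^ (d - k)
             = ((-1) ^ k * ((-1) ^ (k - j) * (-1) ^ j)) * (complex_of_real (W (k - j) j k) * cp (d - (k - j)) * Qc j) * (y ^ (m - d) * (x * y) ^ (d - k))"
            unfolding kk of_real_mult sp sq by (simp only: mult_ac)
          also have "\<dots> = complex_of_real (W (k - j) j k) * cp (d - (k - j)) * Qc j * (x ^ (d - k) * y ^ (m - k))"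
            unfolding sign xy by simp
          also have "\<dots> = h j (d - k)"
          proof -
            have nz1: "(of_nat (d choose (d - (k - j))) :: complex) \<noteq> 0" by simp
            have nz2: "(of_nat (m choose (m - (k - j))) :: complex) \<noteq> 0" by simp
            show ?thesis unfolding hh Wc using nz1 nz2 by (simp add: field_simps)
          qed
          finally show ?thesis .
        qed
        show ?case using FIN by (simp only: mult.assoc)
      qed
    qed
    finally show ?thesis .
  qed
  show ?thesis using LHS RHS unfolding cp_def by simp
qed



lemma poly_as_sum:
  fixes p :: "'a::comm_semiring_1 poly"
  assumes "degree p \<le> n"
  shows "poly p z = (\<Sum>a\<le>n. coeff p a * z ^ a)"
proof -
  have "poly p z = (\<Sum>a\<le>degree p. coeff p a * z ^ a)" by (rule poly_altdef)
  also have "\<dots> = (\<Sum>a\<le>n. coeff p a * z ^ a)"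
    using assms by (intro sum.mono_neutral_left) (auto simp: coeff_eq_0)
  finally show ?thesis .
qed

lemma core:
  fixes p q :: "real poly" and \<beta> :: "nat \<Rightarrow> complex" and t :: complex
  assumes dm: "d \<le> m" and degp: "degree p \<le> d"
    and qf: "map_poly complex_of_real q = (\<Prod>i<d. [:-\<beta> i, 1:])"
    and \<beta>: "\<And>l. Im (\<beta> l) = 0" "\<And>l. Re (\<beta> l) \<ge> 0"
    and proots: "\<And>z. poly (map_poly complex_of_real p) z = 0 \<Longrightarrow> Im z = 0 \<and> Re z \<ge> 0"
    and t: "\<not> (Im t = 0 \<and> Re t \<ge> 0)"
  shows "poly (map_poly complex_of_real (rect_conv d m p q)) t \<noteq> 0"
proof -
  define e where "e = m - d"
  define cp where "cp a = complex_of_real (coeff p a)" for a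
  define \<kappa>0 :: "nat set \<Rightarrow> nat set \<Rightarrow> complex" where "\<kappa>0 = (\<lambda>S R. ccf d m cp (card S) (card R))"
  have st0: "stabl d m \<kappa>0"
    unfolding stabl_def FF_def \<kappa>0_def
  proof (intro allI impI gws2)
    fix s u :: complex assume s: "Im s > 0" and u: "Im u > 0"
    have inner: "(\<Sum>b\<le>m. of_nat (d choose a) * of_nat (m choose b) * ccf d m cp a b * s ^ a * u ^ b)
        = cp a * s ^ a * u ^ (a + e)" if a: "a \<le> d" for a
    proof -
      have ae: "a + e \<le> m" using a dm unfolding e_def by simp
      have "(\<Sum>b\<le>m. of_nat (d choose a) * of_nat (m choose b) * ccf d m cp a b * s ^ a * u ^ b)
          = (\<Sum>b\<le>m. if b = a + e then of_nat (d choose a) * of_nat (m choose b) * (cp a / (of_nat (d choose a) * of_nat (m choose b))) * s ^ a * u ^ b else 0)"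
        unfolding ccf_def e_def by (intro sum.cong refl) auto
      also have "\<dots> = of_nat (d choose a) * of_nat (m choose (a + e)) * (cp a / (of_nat (d choose a) * of_nat (m choose (a + e)))) * s ^ a * u ^ (a + e)"
        using ae by (simp add: sum.delta)
      also have "\<dots> = cp a * s ^ a * u ^ (a + e)"
      proof -
        have "(of_nat (d choose a) :: complex) \<noteq> 0" "(of_nat (m choose (a + e)) :: complex) \<noteq> 0"
          using a ae by simp_all
        thus ?thesis by (simp add: field_simps)
      qed
      finally show ?thesis .
    qed
    have "(\<Sum>a\<le>d. \<Sum>b\<le>m. of_nat (d choose a) * of_nat (m choose b) * ccf d m cp a b * s ^ a * u ^ b)
        = (\<Sum>a\<le>d. cp a * s ^ a * u ^ (a + e))"
      by (intro sum.cong refl inner) simp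
    also have "\<dots> = u ^ e * (\<Sum>a\<le>d. cp a * (s * u) ^ a)"
      by (simp add: sum_distrib_left power_add power_mult_distrib mult_ac)
    also have "(\<Sum>a\<le>d. cp a * (s * u) ^ a) = poly (map_poly complex_of_real p) (s * u)"
      unfolding cp_def using degp by (subst poly_as_sum[of _ d]) (simp_all add: degree_map_poly coeff_map_poly)
    finally have E: "(\<Sum>a\<le>d. \<Sum>b\<le>m. of_nat (d choose a) * of_nat (m choose b) * ccf d m cp a b * s ^ a * u ^ b)
        = u ^ e * poly (map_poly complex_of_real p) (s * u)" .
    have "poly (map_poly complex_of_real p) (s * u) \<noteq> 0"
    proof
      assume "poly (map_poly complex_of_real p) (s * u) = 0"
      hence "Im (s * u) = 0 \<and> Re (s * u) \<ge> 0" by (rule proots)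
      hence "s * u = complex_of_real (Re (s * u))" "Re (s * u) \<ge> 0" by (auto simp: complex_eq_iff)
      with prod_H_not_nonneg[OF s u, of "Re (s * u)"] show False by simp
    qed
    moreover have "u \<noteq> 0" using u by auto
    ultimately show "(\<Sum>a\<le>d. \<Sum>b\<le>m. of_nat (d choose a) * of_nat (m choose b) * ccf d m cp a b * s ^ a * u ^ b) \<noteq> 0"
      unfolding E by simp
  qed auto
  have stK: "stabl d m (KK \<kappa>0 \<beta> d)"
    by (rule KK_stable[OF st0 dm \<beta>]) simp
  define r where "r = csqrt t"
  have r2: "r * r = t" unfolding r_def using power2_csqrt[of t] by (simp add: power2_eq_square)
  have imr: "Im r \<noteq> 0"
  proof
    assume "Im r = 0"
    hence "t = complex_of_real ((Re r)^2)" using r2 by (auto simp: complex_eq_iff power2_eq_square)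
    with t show False by simp
  qed
  define w where "w = (if Im r > 0 then r else - r)"
  have w: "Im w > 0" using imr unfolding w_def by auto
  have ww: "w * w = t" using r2 unfolding w_def by auto
  have "FF d m (KK \<kappa>0 \<beta> d) (\<lambda>_. w) (\<lambda>_. w) \<noteq> 0"
    using stK[unfolded stabl_def, rule_format, of "\<lambda>_. w" "\<lambda>_. w"] w by simp
  also have "FF d m (KK \<kappa>0 \<beta> d) (\<lambda>_. w) (\<lambda>_. w) = w ^ (m - d) * poly (map_poly complex_of_real (rect_conv d m p q)) (w * w)"
    unfolding \<kappa>0_def cp_def by (rule main_identity[OF dm qf])
  finally show ?thesis unfolding ww by simp
qed



definition cpoly :: "'a::comm_ring_1^'n^'n \<Rightarrow> 'a poly" where
  "cpoly N = (\<Sum>\<sigma>\<in>{\<sigma>. \<sigma> permutes (UNIV::'n set)}. smult (of_int (sign \<sigma>))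
      (\<Prod>i\<in>UNIV. if \<sigma> i = i then [:- N$i$i, 1:] else [:- N$i$(\<sigma> i):]))"

lemma poly_cpoly:
  fixes N :: "'a::comm_ring_1^'n^'n"
  shows "poly (cpoly N) z = det (\<chi> i j. (if i = j then z else 0) - N$i$j)"
  unfolding cpoly_def det_def poly_sum
proof (intro sum.cong refl)
  fix \<sigma> :: "'n \<Rightarrow> 'n" assume "\<sigma> \<in> {\<sigma>. \<sigma> permutes UNIV}"
  show "poly (smult (of_int (sign \<sigma>)) (\<Prod>i\<in>UNIV. if \<sigma> i = i then [:- N$i$i, 1:] else [:- N$i$(\<sigma> i):])) z
      = of_int (sign \<sigma>) * (\<Prod>i\<in>UNIV. (\<chi> i j. (if i = j then z else 0) - N$i$j) $ i $ \<sigma> i)"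
  proof -
    have "\<And>i. poly (if \<sigma> i = i then [:- N$i$i, 1:] else [:- N$i$(\<sigma> i):]) z = (if i = \<sigma> i then z else 0) - N$i$(\<sigma> i)"
      by auto
    then show ?thesis by (simp add: poly_prod)
  qed
qed

lemma prod_deg1:
  fixes f :: "'b \<Rightarrow> 'a::comm_ring_1 poly"
  assumes "finite A" "\<forall>i\<in>A. degree (f i) \<le> 1"
  shows "degree (prod f A) \<le> card A \<and> coeff (prod f A) (card A) = (\<Prod>i\<in>A. coeff (f i) 1)"
  using assms
proof (induction A rule: finite_induct)
  case empty then show ?case by simp
next
  case (insert a A)
  have IH: "degree (prod f A) \<le> card A" "coeff (prod f A) (card A) = (\<Prod>i\<in>A. coeff (f i) 1)"
    using insert by auto
  have fa: "f a = pCons (coeff (f a) 0) [:coeff (f a) 1:]"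
    using insert.prems by (intro poly_eqI) (auto simp: coeff_pCons coeff_eq_0 split: nat.splits)
  have deg: "degree (f a * prod f A) \<le> Suc (card A)"
    using degree_mult_le[of "f a" "prod f A"] IH insert.prems by simp
  have "coeff (f a * prod f A) (Suc (card A)) = coeff (f a) 1 * coeff (prod f A) (card A)"
  proof -
    have "coeff (f a * prod f A) (Suc (card A))
        = coeff (smult (coeff (f a) 0) (prod f A) + pCons 0 ([:coeff (f a) 1:] * prod f A)) (Suc (card A))"
      by (subst fa) (simp only: mult_pCons_left)
    also have "\<dots> = coeff (f a) 0 * coeff (prod f A) (Suc (card A)) + coeff (f a) 1 * coeff (prod f A) (card A)"
      by simp
    also have "coeff (prod f A) (Suc (card A)) = 0" using IH by (simp add: coeff_eq_0)
    finally show ?thesis by simp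
  qed
  then show ?case using insert deg IH by simp
qed

lemma cpoly_deg_coeff:
  fixes N :: "'a::comm_ring_1^'n^'n"
  shows "degree (cpoly N) \<le> CARD('n) \<and> coeff (cpoly N) CARD('n) = 1"
proof -
  define h where "h \<sigma> i = (if \<sigma> i = i then [:- N$i$i, 1:] else [:- N$i$(\<sigma> i):])" for \<sigma> :: "'n \<Rightarrow> 'n" and i
  have hdeg: "\<forall>i\<in>UNIV. degree (h \<sigma> i) \<le> 1" for \<sigma> unfolding h_def by auto
  have h1: "coeff (h \<sigma> i) 1 = (if \<sigma> i = i then 1 else 0)" for \<sigma> i unfolding h_def by auto
  have pd: "degree (prod (h \<sigma>) UNIV) \<le> CARD('n) \<and> coeff (prod (h \<sigma>) UNIV) CARD('n) = (\<Prod>i\<in>UNIV. coeff (h \<sigma> i) 1)" for \<sigma>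
    using prod_deg1[of UNIV "h \<sigma>"] hdeg by simp
  have c1: "(\<Prod>i\<in>UNIV. coeff (h \<sigma> i) 1) = (if \<sigma> = id then 1 else 0)" for \<sigma>
  proof (cases "\<sigma> = id")
    case True then show ?thesis unfolding h1 by simp
  next
    case False
    then obtain i where "\<sigma> i \<noteq> i" by (auto simp: fun_eq_iff)
    hence "coeff (h \<sigma> i) 1 = 0" unfolding h1 by simp
    hence "(\<Prod>i\<in>UNIV. coeff (h \<sigma> i) 1) = 0" by (intro prod_zero) auto
    with False show ?thesis by simp
  qed
  have c2: "coeff (prod (h \<sigma>) UNIV) CARD('n) = (if \<sigma> = id then 1 else 0)" for \<sigma>
    using pd[of \<sigma>] c1[of \<sigma>] by simp
  have cp: "cpoly N = (\<Sum>\<sigma>\<in>{\<sigma>. \<sigma> permutes (UNIV::'n set)}. smult (of_int (sign \<sigma>)) (prod (h \<sigma>) UNIV))"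
    unfolding cpoly_def h_def ..
  have "degree (cpoly N) \<le> CARD('n)"
    unfolding cp by (intro degree_sum_le) (auto intro: order_trans[OF degree_smult_le] simp: pd)
  moreover have "coeff (cpoly N) CARD('n) = 1"
  proof -
    have "coeff (cpoly N) CARD('n) = (\<Sum>\<sigma>\<in>{\<sigma>. \<sigma> permutes (UNIV::'n set)}. of_int (sign \<sigma>) * (if \<sigma> = id then 1 else 0))"
      unfolding cp coeff_sum by (intro sum.cong refl) (simp only: coeff_smult c2)
    also have "\<dots> = of_int (sign (id :: 'n \<Rightarrow> 'n))"
      by (simp add: sum.delta' permutes_id if_distrib cong: if_cong)
    also have "\<dots> = 1" by (simp add: sign_id)
    finally show ?thesis .
  qed
  ultimately show ?thesis by simp
qed

lemma scaleR_mat_minus: "(x *\<^sub>R mat 1 - M :: real^'n^'n) = (\<chi> i j. (if i = j then x else 0) - M$i$j)"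
  by (simp add: vec_eq_iff mat_def)

lemma p_is_cpoly:
  fixes M :: "real^'n^'n"
  assumes "\<forall>x. poly p x = det (x *\<^sub>R mat 1 - M)"
  shows "p = cpoly M"
proof -
  have "poly p = poly (cpoly M)" using assms by (simp add: fun_eq_iff poly_cpoly scaleR_mat_minus)
  thus ?thesis by (simp add: poly_eq_poly_eq_iff)
qed

definition cM :: "real^'n^'m \<Rightarrow> complex^'n^'m" where
  "cM M = (\<chi> i j. complex_of_real (M$i$j))"

lemma poly_map_of_real: "poly (map_poly complex_of_real P) (complex_of_real x) = complex_of_real (poly P x)"
  by (simp add: poly_altdef degree_map_poly coeff_map_poly)

lemma det_of_real: "det (cM A) = complex_of_real (det (A :: real^'n^'n))"
  unfolding det_def cM_def by (simp add: of_real_sum of_real_mult of_real_prod)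

lemma poly_eq_on_reals:
  fixes P Q :: "complex poly"
  assumes "\<And>x. poly P (complex_of_real x) = poly Q (complex_of_real x)"
  shows "P = Q"
proof (rule ccontr)
  assume "P \<noteq> Q"
  hence "P - Q \<noteq> 0" by simp
  hence fin: "finite {z. poly (P - Q) z = 0}" by (rule poly_roots_finite)
  have "range complex_of_real \<subseteq> {z. poly (P - Q) z = 0}" using assms by auto
  hence "finite (range complex_of_real)" using fin by (rule finite_subset)
  moreover have "inj complex_of_real" by (auto simp: inj_on_def)
  ultimately have "finite (UNIV :: real set)" using finite_imageD by blast
  thus False by (simp add: infinite_UNIV_char_0)
qed

lemma map_cpoly: "map_poly complex_of_real (cpoly M) = cpoly (cM (M :: real^'n^'n))"
proof (rule poly_eq_on_reals)
  fix x :: real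
  have "poly (cpoly (cM M)) (complex_of_real x) = det (cM (\<chi> i j. (if i = j then x else 0) - M$i$j))"
    unfolding poly_cpoly cM_def by (intro arg_cong[where f = det]) (simp add: vec_eq_iff)
  also have "\<dots> = complex_of_real (poly (cpoly M) x)" unfolding det_of_real poly_cpoly ..
  finally show "poly (map_poly complex_of_real (cpoly M)) (complex_of_real x) = poly (cpoly (cM M)) (complex_of_real x)"
    by (simp add: poly_map_of_real)
qed



lemma gram_roots:
  fixes A :: "real^'d^'m" and z :: complex
  assumes "poly (cpoly (cM (transpose A ** A))) z = 0"
  shows "Im z = 0 \<and> Re z \<ge> 0"
proof -
  define NC where "NC = cM (transpose A ** A)"
  define Z where "Z = (\<chi> i j. (if i = j then z else 0) - NC$i$j)"
  have dZ: "det Z = 0" using assms unfolding Z_def NC_def poly_cpoly .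
  have lin: "Vector_Spaces.linear (*s) (*s) ((*v) Z)" by (rule matrix_vector_mul_linear_gen)
  have "\<not> inj ((*v) Z)"
    using det_nz_iff_inj_gen[OF lin] dZ by (simp add: matrix_of_matrix_vector_mul)
  then obtain v w where vw: "Z *v v = Z *v w" "v \<noteq> w" by (auto simp: inj_on_def)
  define u where "u = v - w"
  have Zu: "Z *v u = 0" unfolding u_def using vw by (simp add: matrix_vector_mult_diff_distrib)
  have u0: "u \<noteq> 0" unfolding u_def using vw by simp
  then obtain i0 where i0: "u$i0 \<noteq> 0" by (auto simp: vec_eq_iff)
  have NCe: "NC$i$j = (\<Sum>k\<in>UNIV. complex_of_real (A$k$i) * complex_of_real (A$k$j))" for i j
    unfolding NC_def cM_def by (simp add: matrix_matrix_mult_def transpose_def of_real_sum)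
  have eig: "(\<Sum>j\<in>UNIV. NC$i$j * u$j) = z * u$i" for i
  proof -
    have "(Z *v u)$i = 0" using Zu by simp
    hence "(\<Sum>j\<in>UNIV. ((if i = j then z else 0) - NC$i$j) * u$j) = 0"
      unfolding Z_def by (simp add: matrix_vector_mult_def)
    hence "(\<Sum>j\<in>UNIV. (if i = j then z else 0) * u$j) - (\<Sum>j\<in>UNIV. NC$i$j * u$j) = 0"
      by (simp add: left_diff_distrib sum_subtractf)
    moreover have "(\<Sum>j\<in>UNIV. (if i = j then z else 0) * u$j) = z * u$i"
    proof -
      have "(\<Sum>j\<in>UNIV. (if i = j then z else 0) * u$j) = (\<Sum>j\<in>UNIV. if i = j then z * u$j else 0)"
        by (rule sum.cong) auto
      also have "\<dots> = z * u$i" by (simp add: sum.delta sum.delta')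
      finally show ?thesis .
    qed
    ultimately show ?thesis by simp
  qed
  define wk where "wk k = (\<Sum>j\<in>UNIV. complex_of_real (A$k$j) * u$j)" for k
  have "(\<Sum>i\<in>UNIV. cnj (u$i) * (\<Sum>j\<in>UNIV. NC$i$j * u$j)) = z * (\<Sum>i\<in>UNIV. cnj (u$i) * u$i)"
    by (simp only: eig) (simp add: sum_distrib_left mult_ac)
  moreover have "(\<Sum>i\<in>UNIV. cnj (u$i) * (\<Sum>j\<in>UNIV. NC$i$j * u$j)) = (\<Sum>k\<in>UNIV. cnj (wk k) * wk k)"
  proof -
    have "(\<Sum>i\<in>UNIV. cnj (u$i) * (\<Sum>j\<in>UNIV. NC$i$j * u$j))
        = (\<Sum>i\<in>UNIV. \<Sum>j\<in>UNIV. \<Sum>k\<in>UNIV. (complex_of_real (A$k$i) * cnj (u$i)) * (complex_of_real (A$k$j) * u$j))"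
      unfolding NCe by (simp add: sum_distrib_left sum_distrib_right mult_ac)
    also have "\<dots> = (\<Sum>i\<in>UNIV. \<Sum>k\<in>UNIV. \<Sum>j\<in>UNIV. (complex_of_real (A$k$i) * cnj (u$i)) * (complex_of_real (A$k$j) * u$j))"
      by (rule sum.cong[OF refl], rule sum.swap)
    also have "\<dots> = (\<Sum>k\<in>UNIV. \<Sum>i\<in>UNIV. \<Sum>j\<in>UNIV. (complex_of_real (A$k$i) * cnj (u$i)) * (complex_of_real (A$k$j) * u$j))"
      by (rule sum.swap)
    also have "\<dots> = (\<Sum>k\<in>UNIV. (\<Sum>i\<in>UNIV. complex_of_real (A$k$i) * cnj (u$i)) * (\<Sum>j\<in>UNIV. complex_of_real (A$k$j) * u$j))"
      by (simp add: sum_product)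
    also have "\<dots> = (\<Sum>k\<in>UNIV. cnj (wk k) * wk k)"
      unfolding wk_def by (simp add: cnj_sum)
    finally show ?thesis .
  qed
  ultimately have E: "z * (\<Sum>i\<in>UNIV. cnj (u$i) * u$i) = (\<Sum>k\<in>UNIV. cnj (wk k) * wk k)" by simp
  have cn: "cnj c * c = complex_of_real ((cmod c)^2)" for c :: complex
    by (metis complex_norm_square mult.commute)
  define a where "a = (\<Sum>i\<in>UNIV. (cmod (u$i))^2)"
  define b where "b = (\<Sum>k\<in>UNIV. (cmod (wk k))^2)"
  have apos: "a > 0"
  proof -
    have "(cmod (u$i0))^2 \<le> a" unfolding a_def by (rule member_le_sum) auto
    moreover have "(cmod (u$i0))^2 > 0" using i0 by simp
    ultimately show ?thesis by linarith
  qed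
  have bnn: "b \<ge> 0" unfolding b_def by (simp add: sum_nonneg)
  have "z * complex_of_real a = complex_of_real b"
    using E unfolding a_def b_def cn by (simp add: of_real_sum)
  hence "z = complex_of_real (b / a)" using apos by (simp add: field_simps)
  thus ?thesis using apos bnn by simp
qed

lemma construct_C:
  fixes \<rho> :: "nat \<Rightarrow> real"
  assumes card: "CARD('d) \<le> CARD('m)" and nn: "\<And>i. \<rho> i \<ge> 0"
  shows "\<exists>C :: real^'d^'m. \<forall>t. det (t *\<^sub>R mat 1 - transpose C ** C) = (\<Prod>i<CARD('d). (t - \<rho> i))"
proof -
  obtain h :: "'d \<Rightarrow> nat" where h: "bij_betw h UNIV {0..<CARD('d)}"
    using ex_bij_betw_finite_nat[of "UNIV :: 'd set"] by auto
  obtain \<iota> :: "'d \<Rightarrow> 'm" where \<iota>: "inj_on \<iota> UNIV"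
    using card_le_inj[of "UNIV :: 'd set" "UNIV :: 'm set"] card by auto
  define C :: "real^'d^'m" where "C = (\<chi> r c. if r = \<iota> c then sqrt (\<rho> (h c)) else 0)"
  have CTC: "(transpose C ** C)$a$b = (if a = b then \<rho> (h a) else 0)" for a b
  proof -
    have "(transpose C ** C)$a$b = (\<Sum>r\<in>UNIV. (if r = \<iota> a then sqrt (\<rho> (h a)) else 0) * (if r = \<iota> b then sqrt (\<rho> (h b)) else 0))"
      unfolding C_def by (simp add: matrix_matrix_mult_def transpose_def)
    also have "\<dots> = (if \<iota> a = \<iota> b then sqrt (\<rho> (h a)) * sqrt (\<rho> (h b)) else 0)"
    proof -
      have "(\<Sum>r\<in>UNIV. (if r = \<iota> a then sqrt (\<rho> (h a)) else 0) * (if r = \<iota> b then sqrt (\<rho> (h b)) else 0))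
          = (\<Sum>r\<in>UNIV. if r = \<iota> a then (if \<iota> a = \<iota> b then sqrt (\<rho> (h a)) * sqrt (\<rho> (h b)) else 0) else 0)"
        by (rule sum.cong) auto
      also have "\<dots> = (if \<iota> a = \<iota> b then sqrt (\<rho> (h a)) * sqrt (\<rho> (h b)) else 0)"
        by (simp add: sum.delta)
      finally show ?thesis .
    qed
    also have "\<dots> = (if a = b then \<rho> (h a) else 0)"
      using \<iota> nn by (auto simp: inj_on_def)
    finally show ?thesis .
  qed
  have "det (t *\<^sub>R mat 1 - transpose C ** C) = (\<Prod>i<CARD('d). (t - \<rho> i))" for t
  proof -
    have "det (t *\<^sub>R mat 1 - transpose C ** C) = (\<Prod>a\<in>UNIV. (t *\<^sub>R mat 1 - transpose C ** C)$a$a)"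
      by (rule det_diagonal) (simp add: CTC mat_def)
    also have "\<dots> = (\<Prod>a\<in>UNIV. t - \<rho> (h a))" by (simp add: CTC mat_def)
    also have "\<dots> = (\<Prod>i\<in>{0..<CARD('d)}. t - \<rho> i)"
      by (rule prod.reindex_bij_betw[OF h])
    finally show ?thesis by (simp add: atLeast0LessThan)
  qed
  thus ?thesis by blast
qed



lemma rect_conv_top:
  fixes p q :: "real poly"
  assumes "d > 0" "coeff p d = 1" "coeff q d = 1"
  shows "degree (rect_conv d m p q) \<le> d \<and> coeff (rect_conv d m p q) d = 1"
proof -
  define c where "c k = (-1) ^ k *
        (\<Sum>i\<in>{0..k}. let j = k - i in
           (fact (d - i) * fact (d - j)) / (fact d * fact (d - k)) *
           ((fact (m - i) * fact (m - j)) / (fact m * fact (m - k))) *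
           sgn_coeff d p i * sgn_coeff d q j)" for k :: nat
  have rc: "rect_conv d m p q = (\<Sum>k\<in>{0..d}. monom (c k) (d - k))"
    unfolding rect_conv_def c_def ..
  have "degree (rect_conv d m p q) \<le> d"
    unfolding rc by (intro degree_sum_le) (auto intro: order_trans[OF degree_monom_le])
  moreover have "coeff (rect_conv d m p q) d = 1"
  proof -
    have "coeff (rect_conv d m p q) d = (\<Sum>k\<in>{0..d}. if d - k = d then c k else 0)"
      unfolding rc by (simp add: coeff_sum coeff_monom)
    also have "\<dots> = (\<Sum>k\<in>{0..d}. if k = 0 then c k else 0)"
      using assms(1) by (intro sum.cong refl) auto
    also have "\<dots> = c 0" by (simp add: sum.delta')
    also have "\<dots> = 1" unfolding c_def using assms by (simp add: sgn_coeff_def)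
    finally show ?thesis .
  qed
  ultimately show ?thesis ..
qed

theorem mainTheorem12:
  fixes A B :: "real ^ 'd ^ 'm" and p q :: "real poly"
  assumes "CARD('d) \<le> CARD('m)"
    and "\<forall>x. poly p x = det (x *\<^sub>R mat 1 - transpose A ** A)"
    and "\<forall>x. poly q x = det (x *\<^sub>R mat 1 - transpose B ** B)"
  shows "\<exists>C :: real ^ 'd ^ 'm. \<forall>x y :: real.
           y ^ (CARD('m) - CARD('d)) * poly (rect_conv CARD('d) CARD('m) p q) (x * y)
         = y ^ (CARD('m) - CARD('d)) * det ((x * y) *\<^sub>R mat 1 - transpose C ** C)"
proof -
  define d where "d = CARD('d)"
  define m where "m = CARD('m)"
  have dm: "d \<le> m" using assms(1) unfolding d_def m_def .
  have dpos: "d > 0" unfolding d_def by simp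
  have pA: "p = cpoly (transpose A ** A)" using p_is_cpoly assms(2) by blast
  have qB: "q = cpoly (transpose B ** B)" using p_is_cpoly assms(3) by blast
  have dp: "degree p \<le> d" "coeff p d = 1" unfolding pA d_def using cpoly_deg_coeff by auto
  have dq: "degree q \<le> d" "coeff q d = 1" unfolding qB d_def using cpoly_deg_coeff by auto
  have proots: "Im z = 0 \<and> Re z \<ge> 0" if "poly (map_poly complex_of_real p) z = 0" for z
    using that unfolding pA map_cpoly by (rule gram_roots)
  have qroots: "Im z = 0 \<and> Re z \<ge> 0" if "poly (map_poly complex_of_real q) z = 0" for z
    using that unfolding qB map_cpoly by (rule gram_roots)
  define qC where "qC = map_poly complex_of_real q"
  have degq: "degree q = d" using dq by (metis antisym le_degree zero_neq_one)
  have degqC: "degree qC = d" unfolding qC_def by (simp add: degree_map_poly degq)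
  have lqC: "lead_coeff qC = 1" using degqC unfolding qC_def by (simp add: coeff_map_poly degq dq)
  obtain root where dec: "smult (lead_coeff qC) (\<Prod>i<degree qC. [:-root i, 1:]) = qC"
    using complex_poly_decompose' by blast
  define \<beta> where "\<beta> l = (if l < d then root l else 0)" for l
  have qf: "map_poly complex_of_real q = (\<Prod>i<d. [:-\<beta> i, 1:])"
  proof -
    have "qC = (\<Prod>i<d. [:-root i, 1:])" using dec lqC degqC by simp
    also have "\<dots> = (\<Prod>i<d. [:-\<beta> i, 1:])" unfolding \<beta>_def by (intro prod.cong) auto
    finally show ?thesis unfolding qC_def .
  qed
  have \<beta>p: "Im (\<beta> l) = 0 \<and> Re (\<beta> l) \<ge> 0" for l
  proof (cases "l < d")
    case True
    have "poly (map_poly complex_of_real q) (\<beta> l) = 0" unfolding qf using True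
      by (simp add: poly_prod) (metis lessThan_iff)
    thus ?thesis by (rule qroots)
  next
    case False then show ?thesis unfolding \<beta>_def by simp
  qed
  define rc where "rc = rect_conv d m p q"
  have nz: "poly (map_poly complex_of_real rc) t \<noteq> 0" if "\<not> (Im t = 0 \<and> Re t \<ge> 0)" for t
    unfolding rc_def using core[OF dm dp(1) qf _ _ proots that] \<beta>p by blast
  have rtop: "degree rc \<le> d" "coeff rc d = 1"
    using rect_conv_top[OF dpos dp(2) dq(2)] unfolding rc_def by auto
  define rC where "rC = map_poly complex_of_real rc"
  have degr: "degree rc = d" using rtop by (metis antisym le_degree zero_neq_one)
  have degrC: "degree rC = d" unfolding rC_def by (simp add: degree_map_poly degr)
  have lrC: "lead_coeff rC = 1" using degrC unfolding rC_def by (simp add: coeff_map_poly degr rtop)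
  obtain rho where decr: "smult (lead_coeff rC) (\<Prod>i<degree rC. [:-rho i, 1:]) = rC"
    using complex_poly_decompose' by blast
  have rCf: "rC = (\<Prod>i<d. [:-rho i, 1:])" using decr lrC degrC by simp
  have rhop: "Im (rho i) = 0 \<and> Re (rho i) \<ge> 0" if "i < d" for i
  proof (rule ccontr)
    assume "\<not> (Im (rho i) = 0 \<and> Re (rho i) \<ge> 0)"
    hence "poly rC (rho i) \<noteq> 0" using nz unfolding rC_def by blast
    moreover have "poly rC (rho i) = 0" unfolding rCf using that
      by (simp add: poly_prod) (metis lessThan_iff)
    ultimately show False by simp
  qed
  define \<rho> where "\<rho> i = (if i < d then Re (rho i) else 0)" for i
  have \<rho>nn: "\<rho> i \<ge> 0" for i unfolding \<rho>_def using rhop by auto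
  have rcx: "poly rc x = (\<Prod>i<d. (x - \<rho> i))" for x
  proof -
    have "complex_of_real (poly rc x) = poly rC (complex_of_real x)"
      unfolding rC_def by (simp add: poly_map_of_real)
    also have "\<dots> = (\<Prod>i<d. (complex_of_real x - rho i))" unfolding rCf by (simp add: poly_prod)
    also have "\<dots> = (\<Prod>i<d. complex_of_real (x - \<rho> i))"
    proof (intro prod.cong refl)
      fix i assume "i \<in> {..<d}"
      hence "i < d" by simp
      hence "rho i = complex_of_real (\<rho> i)" using rhop[of i] unfolding \<rho>_def by (simp add: complex_eq_iff)
      thus "complex_of_real x - rho i = complex_of_real (x - \<rho> i)" by simp
    qed
    also have "\<dots> = complex_of_real (\<Prod>i<d. (x - \<rho> i))" by simp
    finally show ?thesis by (simp only: of_real_eq_iff)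
  qed
  obtain C :: "real^'d^'m" where C: "\<And>t. det (t *\<^sub>R mat 1 - transpose C ** C) = (\<Prod>i<CARD('d). (t - \<rho> i))"
    using construct_C[of \<rho>, OF assms(1) \<rho>nn] by blast
  show ?thesis
  proof (intro exI allI)
    fix x y :: real
    show "y ^ (CARD('m) - CARD('d)) * poly (rect_conv CARD('d) CARD('m) p q) (x * y)
         = y ^ (CARD('m) - CARD('d)) * det ((x * y) *\<^sub>R mat 1 - transpose C ** C)"
      using rcx[of "x * y"] C[of "x * y"] unfolding rc_def d_def m_def by simp
  qed
qed


end
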